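(* Let $1<p<\infty$, $q=\frac{p}{p-1}$, $0\le\beta<1-\frac1p$, let $f\in L^p$, let $\omega$ be a function of modulus of continuity type, and let $x$ be a fixed real number. Suppose that for all $n\ge 1$ \[ \sum_{m=1}^{n}(m+1)^{\beta+1-\frac{2}{q}}\left\{\int_{\frac{\pi}{m+1}}^{\frac{\pi}{m}}\left(\frac{|\varphi_x(t)|}{\omega(t)}\right)^{p}\sin^{\beta p}\frac{t}{2}\,dt\right\}^{1/p}=O_x\!\left((n+1)^{\beta}\right) \] and \[ \left\{\int_{0}^{\frac{2\pi}{n}}\left(\frac{|\varphi_x(t)|}{\omega(t)}\right)^{p}\sin^{\beta p}\frac{t}{2}\,dt\right\}^{1/p}=O_x\!\left((n+1)^{-1/p}\right). \] If the matrix $A=(a_{n,k})$ satisfies the $MRBVS$ condition, then \[ |T_{n,A}f(x)-f(x)|=O_x\!\left((n+1)^{\beta}\sum_{k=0}^{n}a_{n,k}\,\omega\!\left(\frac{\pi}{k+1}\right)\right), \] and if $A$ satisfies the $MHBVS$ condition, then \[ |T_{n,A}f(x)-f(x)|=O_x\!\left((n+1)^{\beta}\sum_{k=0}^{n}a_{n,n-k}\,\omega\!\left(\frac{\pi}{k+1}\right)\right). \]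
   Context: $L^p$ ($1\le p<\infty$) is the class of $2\pi$-periodic real functions Lebesgue integrable with $p$-th power over $[-\pi,\pi]$. $S_kf$ denotes the $k$-th partial sum of the trigonometric Fourier series of $f$. $A=(a_{n,k})$ is an infinite lower triangular real matrix with $a_{n,k}\ge0$ for $0\le k\le n$, $a_{n,k}=0$ for $k>n$, and $\sum_{k=0}^n a_{n,k}=1$ for every $n$; $T_{n,A}f(x)=\sum_{k=0}^n a_{n,k}S_kf(x)$. $\varphi_x(t)=f(x+t)+f(x-t)-2f(x)$. A function $\omega$ of modulus of continuity type on $[0,2\pi]$ is a nondecreasing continuous function with $\omega(0)=0$ and $\omega(\delta_1+\delta_2)\le\omega(\delta_1)+\omega(\delta_2)$ for $0\le\delta_1\le\delta_2\le\delta_1+\delta_2\le2\pi$ (implicitly positive on $(0,2\pi]$). "$A$ satisfies the $MRBVS$ condition" means: there is a constant $K$ such that for all $n$ and all $0\le m<n$, $\sum_{k=m}^{n-1}|a_{n,k}-a_{n,k+1}|\le K\frac{1}{m+1}\sum_{m/2\le k\le m}a_{n,k}$. "$A$ satisfies the $MHBVS$ condition" means: there is a constant $K$ such that for all $n$ and all $0\le m<n$, $\sum_{k=0}^{n-m-1}|a_{n,k}-a_{n,k+1}|\le K\frac1{m+1}\sum_{k=n-m}^{n}a_{n,k}$. $O_x(\cdot)$ means bounded by a constant (possibly depending on $x$) times the indicated quantity, uniformly in $n$. *)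

theory Defs
  imports "HOL-Analysis.Analysis"
begin

definition Lp_periodic :: "real \<Rightarrow> (real \<Rightarrow> real) \<Rightarrow> bool" where
  "Lp_periodic p f \<longleftrightarrow> f \<in> borel_measurable lborel \<and> (\<forall>t. f (t + 2*pi) = f t)
     \<and> set_integrable lborel {-pi..pi} (\<lambda>t. \<bar>f t\<bar> powr p)"

definition fourier_a :: "(real \<Rightarrow> real) \<Rightarrow> nat \<Rightarrow> real" where
  "fourier_a f j = (LBINT t=-pi..pi. f t * cos (real j * t)) / pi"

definition fourier_b :: "(real \<Rightarrow> real) \<Rightarrow> nat \<Rightarrow> real" where
  "fourier_b f j = (LBINT t=-pi..pi. f t * sin (real j * t)) / pi"

definition partial_sum :: "(real \<Rightarrow> real) \<Rightarrow> nat \<Rightarrow> real \<Rightarrow> real" where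
  "partial_sum f k x = fourier_a f 0 / 2
     + (\<Sum>j=1..k. fourier_a f j * cos (real j * x) + fourier_b f j * sin (real j * x))"

definition T_mean :: "(nat \<Rightarrow> nat \<Rightarrow> real) \<Rightarrow> (real \<Rightarrow> real) \<Rightarrow> nat \<Rightarrow> real \<Rightarrow> real" where
  "T_mean a f n x = (\<Sum>k=0..n. a n k * partial_sum f k x)"

definition phi :: "(real \<Rightarrow> real) \<Rightarrow> real \<Rightarrow> real \<Rightarrow> real" where
  "phi f x t = f (x + t) + f (x - t) - 2 * f x"

definition modulus_type :: "(real \<Rightarrow> real) \<Rightarrow> bool" where
  "modulus_type \<omega> \<longleftrightarrow> mono_on {0..2*pi} \<omega> \<and> continuous_on {0..2*pi} \<omega> \<and> \<omega> 0 = 0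
     \<and> (\<forall>d1 d2. 0 \<le> d1 \<and> d1 \<le> d2 \<and> d1 + d2 \<le> 2*pi \<longrightarrow> \<omega> (d1 + d2) \<le> \<omega> d1 + \<omega> d2)
     \<and> (\<forall>d. 0 < d \<and> d \<le> 2*pi \<longrightarrow> 0 < \<omega> d)"

definition lower_tri_stoch :: "(nat \<Rightarrow> nat \<Rightarrow> real) \<Rightarrow> bool" where
  "lower_tri_stoch a \<longleftrightarrow> (\<forall>n k. k \<le> n \<longrightarrow> 0 \<le> a n k) \<and> (\<forall>n k. n < k \<longrightarrow> a n k = 0)
     \<and> (\<forall>n. (\<Sum>k=0..n. a n k) = 1)"

definition MRBVS :: "(nat \<Rightarrow> nat \<Rightarrow> real) \<Rightarrow> bool" where
  "MRBVS a \<longleftrightarrow> (\<exists>K. \<forall>n m. m < n \<longrightarrow>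
     (\<Sum>k=m..n-1. \<bar>a n k - a n (k+1)\<bar>)
       \<le> K * (1 / real (m+1)) * (\<Sum>k\<in>{k. real m / 2 \<le> real k \<and> k \<le> m}. a n k))"

definition MHBVS :: "(nat \<Rightarrow> nat \<Rightarrow> real) \<Rightarrow> bool" where
  "MHBVS a \<longleftrightarrow> (\<exists>K. \<forall>n m. m < n \<longrightarrow>
     (\<Sum>k=0..n-m-1. \<bar>a n k - a n (k+1)\<bar>)
       \<le> K * (1 / real (m+1)) * (\<Sum>k=n-m..n. a n k))"

definition wint :: "real \<Rightarrow> real \<Rightarrow> (real \<Rightarrow> real) \<Rightarrow> (real \<Rightarrow> real) \<Rightarrow> real \<Rightarrow> real \<Rightarrow> real \<Rightarrow> ennreal" where
  "wint p \<beta> f \<omega> x u v = (\<integral>\<^sup>+ t. indicator {u..v} t *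
      ennreal ((\<bar>phi f x t\<bar> / \<omega> t) powr p * (sin (t/2)) powr (\<beta> * p)) \<partial>lborel)"

end

theory Submission
  imports Defs
begin

definition Dk :: "nat \<Rightarrow> real \<Rightarrow> real" where
  "Dk k t = 1/2 + (\<Sum>j=1..k. cos (real j * t))"

lemma sin_step: "sin ((A::real) + t/2) - sin (A - t/2) = 2 * cos A * sin (t/2)"
  by (simp add: sin_add sin_diff)

lemma cos_step: "cos ((A::real) - t/2) - cos (A + t/2) = 2 * sin A * sin (t/2)"
  by (simp add: cos_add cos_diff)

lemma dirichlet: "2 * sin (t/2) * Dk k t = sin ((real k + 1/2) * t)"
proof (induction k)
  case 0 then show ?case by (simp add: Dk_def)
next
  case (Suc k)
  have "Dk (Suc k) t = Dk k t + cos (real (Suc k) * t)" by (simp add: Dk_def)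
  hence "2 * sin (t/2) * Dk (Suc k) t = sin ((real k + 1/2) * t) + 2 * cos (real (Suc k) * t) * sin (t/2)"
    using Suc by (simp add: algebra_simps)
  also have "2 * cos (real (Suc k) * t) * sin (t/2) = sin (real (Suc k) * t + t/2) - sin (real (Suc k) * t - t/2)"
    by (simp add: sin_step)
  also have "real (Suc k) * t - t/2 = (real k + 1/2) * t" by (simp add: algebra_simps)
  also have "real (Suc k) * t + t/2 = (real (Suc k) + 1/2) * t" by (simp add: algebra_simps)
  finally show ?case by simp
qed

lemma Dk_bound: "\<bar>Dk k t\<bar> \<le> real k + 1/2"
proof -
  have "\<bar>\<Sum>j=1..k. cos (real j * t)\<bar> \<le> (\<Sum>j=1..k. 1)"
    by (rule order_trans[OF sum_abs]) (intro sum_mono, simp)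
  thus ?thesis unfolding Dk_def by simp
qed

lemma sin_sum: "m \<le> k \<Longrightarrow> 2 * sin (t/2) * (\<Sum>j\<in>{m..<k}. sin ((real j + 1/2) * t)) = cos (real m * t) - cos (real k * t)"
proof (induction k rule: dec_induct)
  case base then show ?case by simp
next
  case (step k)
  have "2 * sin (t/2) * (\<Sum>j\<in>{m..<Suc k}. sin ((real j + 1/2) * t))
      = 2 * sin (t/2) * (\<Sum>j\<in>{m..<k}. sin ((real j + 1/2) * t)) + 2 * sin ((real k + 1/2) * t) * sin (t/2)"
    using step by (simp add: algebra_simps)
  also have "2 * sin ((real k + 1/2) * t) * sin (t/2) = cos ((real k + 1/2) * t - t/2) - cos ((real k + 1/2) * t + t/2)"
    by (simp add: cos_step)
  also have "(real k + 1/2) * t - t/2 = real k * t" by (simp add: algebra_simps)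
  also have "(real k + 1/2) * t + t/2 = real (Suc k) * t" by (simp add: algebra_simps)
  finally show ?case using step by simp
qed

lemma sin_sum_bound:
  assumes "m \<le> k" "0 < sin (t/2)"
  shows "\<bar>\<Sum>j\<in>{m..<k}. sin ((real j + 1/2) * t)\<bar> \<le> 1 / sin (t/2)"
proof -
  have "\<bar>2 * sin (t/2) * (\<Sum>j\<in>{m..<k}. sin ((real j + 1/2) * t))\<bar> \<le> 2"
    unfolding sin_sum[OF assms(1)] using cos_le_one[of "real m * t"] cos_ge_minus_one[of "real k * t"]
      cos_ge_minus_one[of "real m * t"] cos_le_one[of "real k * t"] by linarith
  hence "2 * sin (t/2) * \<bar>\<Sum>j\<in>{m..<k}. sin ((real j + 1/2) * t)\<bar> \<le> 2"
    using assms(2) by (simp add: abs_mult)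
  thus ?thesis using assms(2) by (simp add: field_simps)
qed

lemma abel_id:
  fixes b z :: "nat \<Rightarrow> real"
  assumes "m \<le> n"
  shows "(\<Sum>k\<in>{m..n}. b k * z k) = (\<Sum>k\<in>{m..<n}. (b k - b (Suc k)) * (\<Sum>j\<in>{m..k}. z j)) + b n * (\<Sum>j\<in>{m..n}. z j)"
  using assms
proof (induction n rule: dec_induct)
  case base then show ?case by simp
next
  case (step n)
  have e1: "{m..Suc n} = insert (Suc n) {m..n}" using step by auto
  show ?case using step by (simp add: e1 algebra_simps)
qed

lemma abel_bound:
  fixes b z :: "nat \<Rightarrow> real"
  assumes "m \<le> n" "\<And>k. m \<le> k \<Longrightarrow> k \<le> n \<Longrightarrow> \<bar>\<Sum>j\<in>{m..k}. z j\<bar> \<le> B" "0 \<le> b n"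
  shows "\<bar>\<Sum>k\<in>{m..n}. b k * z k\<bar> \<le> B * ((\<Sum>k\<in>{m..<n}. \<bar>b k - b (Suc k)\<bar>) + b n)"
proof -
  have B0: "0 \<le> B" using assms(2)[of m] assms(1) by auto
  have "\<bar>\<Sum>k\<in>{m..<n}. (b k - b (Suc k)) * (\<Sum>j\<in>{m..k}. z j)\<bar> \<le> (\<Sum>k\<in>{m..<n}. \<bar>b k - b (Suc k)\<bar> * B)"
    by (rule order_trans[OF sum_abs], rule sum_mono) (auto simp: abs_mult intro!: mult_left_mono assms(2))
  moreover have "\<bar>b n * (\<Sum>j\<in>{m..n}. z j)\<bar> \<le> b n * B"
    using assms by (simp add: abs_mult mult_left_mono)
  ultimately have "\<bar>(\<Sum>k\<in>{m..<n}. (b k - b (Suc k)) * (\<Sum>j\<in>{m..k}. z j)) + b n * (\<Sum>j\<in>{m..n}. z j)\<bar>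
      \<le> (\<Sum>k\<in>{m..<n}. \<bar>b k - b (Suc k)\<bar> * B) + b n * B"
    by linarith
  moreover have "(\<Sum>k\<in>{m..<n}. \<bar>b k - b (Suc k)\<bar> * B) = B * (\<Sum>k\<in>{m..<n}. \<bar>b k - b (Suc k)\<bar>)"
    by (simp add: sum_distrib_left mult.commute)
  ultimately show ?thesis unfolding abel_id[OF assms(1)]
    by (simp add: algebra_simps)
qed

lemma telescope_bound:
  fixes b :: "nat \<Rightarrow> real" and i N :: nat
  assumes "i \<le> N"
  shows "b N \<le> b i + (\<Sum>k\<in>{i..<N}. \<bar>b k - b (Suc k)\<bar>)"
  using assms
proof (induction N rule: dec_induct)
  case base then show ?case by simp
next
  case (step N) then show ?case by simp
qed

lemma telescope_bound2:
  fixes b :: "nat \<Rightarrow> real" and i N :: nat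
  assumes "i \<le> N"
  shows "b i \<le> b N + (\<Sum>k\<in>{i..<N}. \<bar>b k - b (Suc k)\<bar>)"
  using assms
proof (induction N rule: dec_induct)
  case base then show ?case by simp
next
  case (step N) then show ?case by simp
qed

lemma lts_nonneg: "lower_tri_stoch a \<Longrightarrow> 0 \<le> a n k"
  unfolding lower_tri_stoch_def by (cases "k \<le> n") (auto simp: not_le)

lemma lts_sum: "lower_tri_stoch a \<Longrightarrow> (\<Sum>k=0..n. a n k) = 1"
  unfolding lower_tri_stoch_def by auto

lemma sum_sub_le:
  fixes g :: "nat \<Rightarrow> real"
  assumes "A \<subseteq> B" "finite B" "\<And>k. 0 \<le> g k"
  shows "sum g A \<le> sum g B"
  using assms by (intro sum_mono2) auto

lemma card_half_lower:
  "real (m + 1) \<le> 2 * real (card {(m+1) div 2..m})"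
proof -
  have "card {(m+1) div 2..m} = m + 1 - (m+1) div 2" by simp
  moreover have "(m+1) div 2 \<le> m + 1" by simp
  ultimately show ?thesis by linarith
qed

lemma card_half_upper:
  "real (m + 1) \<le> 2 * real (card {n - m..n - m div 2})" if "m \<le> n"
proof -
  have "card {n - m..n - m div 2} = n - m div 2 + 1 - (n - m)" by simp
  also have "\<dots> = m - m div 2 + 1" using that by simp
  finally show ?thesis by linarith
qed

lemma sin_abs_sum_le:
  fixes b c :: "'a \<Rightarrow> real"
  assumes "\<And>k. 0 \<le> b k"
  shows "\<bar>\<Sum>k\<in>A. b k * sin (c k)\<bar> \<le> sum b A"
proof -
  have "\<bar>\<Sum>k\<in>A. b k * sin (c k)\<bar> \<le> (\<Sum>k\<in>A. \<bar>b k * sin (c k)\<bar>)" by (rule sum_abs)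
  also have "\<dots> \<le> (\<Sum>k\<in>A. b k)"
  proof (rule sum_mono)
    fix k
    have "\<bar>sin (c k)\<bar> \<le> 1" by (rule abs_sin_le_one)
    hence "b k * \<bar>sin (c k)\<bar> \<le> b k * 1" using assms[of k] by (intro mult_left_mono) auto
    thus "\<bar>b k * sin (c k)\<bar> \<le> b k" using assms[of k] by (simp add: abs_mult)
  qed
  finally show ?thesis .
qed

lemma sin_partial_bound:
  assumes s: "0 < sin (t/2)" "1 / sin (t/2) \<le> real m + 1" and "m0 \<le> k"
  shows "\<bar>\<Sum>j\<in>{m0..k}. sin ((real j + 1/2) * t)\<bar> \<le> real m + 1"
proof -
  have "{m0..k} = {m0..<Suc k}" by auto
  thus ?thesis using sin_sum_bound[of m0 "Suc k" t] assms by simp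
qed

lemma mr_kernel:
  assumes lts: "lower_tri_stoch a" and K0: "0 \<le> K"
    and MR: "\<And>n m. m < n \<Longrightarrow> (\<Sum>k=m..n-1. \<bar>a n k - a n (k+1)\<bar>)
       \<le> K * (1 / real (m+1)) * (\<Sum>k\<in>{k. real m / 2 \<le> real k \<and> k \<le> m}. a n k)"
    and m: "m \<le> n"
    and s: "0 < sin (t/2)" "1 / sin (t/2) \<le> real m + 1"
  shows "\<bar>\<Sum>k=0..n. a n k * sin ((real k + 1/2) * t)\<bar> \<le> (3 + 3*K) * (\<Sum>k=0..m. a n k)"
proof -
  define G where "G = (\<Sum>k=0..m. a n k)"
  have anonneg: "\<And>k. 0 \<le> a n k" using lts_nonneg[OF lts] by blast
  have G0: "0 \<le> G" unfolding G_def by (intro sum_nonneg anonneg)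
  show ?thesis
  proof (cases "m = n")
    case True
    have "\<bar>\<Sum>k=0..n. a n k * sin ((real k + 1/2) * t)\<bar> \<le> (\<Sum>k=0..n. a n k)"
      by (rule sin_abs_sum_le[OF anonneg])
    also have "\<dots> \<le> (3 + 3*K) * (\<Sum>k=0..m. a n k)"
      using True G0 K0 unfolding G_def by (simp add: algebra_simps)
    finally show ?thesis .
  next
    case False
    hence mn: "m < n" using m by simp
    define D where "D = (\<Sum>k\<in>{m..<n}. \<bar>a n k - a n (Suc k)\<bar>)"
    have Sm_le: "(\<Sum>k\<in>{k. real j / 2 \<le> real k \<and> k \<le> j}. a n k) \<le> G" if "j \<le> m" for j
      unfolding G_def by (rule sum_sub_le[OF _ _ anonneg]) (use that in auto)
    have D_bound: "real (m+1) * D \<le> K * G"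
    proof -
      have "{m..n-1} = {m..<n}" using mn by auto
      hence "D \<le> K * (1 / real (m+1)) * (\<Sum>k\<in>{k. real m / 2 \<le> real k \<and> k \<le> m}. a n k)"
        using MR[OF mn] unfolding D_def by simp
      also have "\<dots> \<le> K * (1 / real (m+1)) * G"
        using Sm_le[of m] K0 by (intro mult_left_mono) auto
      finally show ?thesis by (simp add: field_simps)
    qed
    define J where "J = {(m+1) div 2..m}"
    have avg: "real (m+1) * a n n \<le> real (m+1) * a n j + 2 * K * G" if "j \<in> J" for j
    proof -
      have j: "(m+1) div 2 \<le> j" "j \<le> m" using that unfolding J_def by auto
      have jn: "j < n" using j mn by simp
      have t1: "a n n \<le> a n j + (\<Sum>k\<in>{j..<n}. \<bar>a n k - a n (Suc k)\<bar>)"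
        using telescope_bound[where b="a n" and i=j and N=n] jn by simp
      have t2: "(\<Sum>k\<in>{j..<n}. \<bar>a n k - a n (Suc k)\<bar>) \<le> K * (1 / real (j+1)) * G"
      proof -
        have "{j..n-1} = {j..<n}" using jn by auto
        hence "(\<Sum>k\<in>{j..<n}. \<bar>a n k - a n (Suc k)\<bar>) \<le> K * (1 / real (j+1)) * (\<Sum>k\<in>{k. real j / 2 \<le> real k \<and> k \<le> j}. a n k)"
          using MR[OF jn] by simp
        also have "\<dots> \<le> K * (1 / real (j+1)) * G"
          using Sm_le[OF j(2)] K0 by (intro mult_left_mono) auto
        finally show ?thesis .
      qed
      have "a n n \<le> a n j + K * (1 / real (j+1)) * G" using t1 t2 by linarith
      hence "real (m+1) * a n n \<le> real (m+1) * (a n j + K * (1 / real (j+1)) * G)"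
        by (rule mult_left_mono) simp
      hence "real (m+1) * a n n \<le> real (m+1) * a n j + real (m+1) * (K * (1 / real (j+1)) * G)"
        by (simp add: distrib_left)
      also have "real (m+1) * (K * (1 / real (j+1)) * G) \<le> 2 * K * G"
      proof -
        have "m+1 \<le> 2 * (j+1)" using j by presburger
        hence "real (m+1) \<le> 2 * real (j+1)" by linarith
        hence "real (m+1) / real (j+1) \<le> 2" by (simp add: field_simps)
        hence "real (m+1) / real (j+1) * (K * G) \<le> 2 * (K * G)"
          using K0 G0 by (intro mult_right_mono) auto
        thus ?thesis by (simp add: field_simps)
      qed
      finally show ?thesis by simp
    qed
    have aJ: "(\<Sum>j\<in>J. a n j) \<le> G" unfolding G_def J_def by (rule sum_sub_le[OF _ _ anonneg]) auto
    have an_bound: "real (m+1) * a n n \<le> (2 + 2*K) * G"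
    proof -
      have "real (card J) * (real (m+1) * a n n) \<le> (\<Sum>j\<in>J. real (m+1) * a n j + 2 * K * G)"
        using sum_mono[OF avg, of J] by simp
      also have "\<dots> = real (m+1) * (\<Sum>j\<in>J. a n j) + real (card J) * (2 * K * G)"
        by (simp add: sum.distrib sum_distrib_left)
      also have "\<dots> \<le> real (m+1) * G + real (card J) * (2 * K * G)"
        using aJ by (intro add_right_mono mult_left_mono) auto
      finally have *: "real (card J) * (real (m+1) * a n n) \<le> real (m+1) * G + real (card J) * (2 * K * G)" .
      have cJ: "real (m+1) \<le> 2 * real (card J)" unfolding J_def by (rule card_half_lower)
      have cJpos: "0 < real (card J)" using cJ by linarith
      have "real (m+1) * G \<le> 2 * real (card J) * G" using cJ G0 by (intro mult_right_mono) auto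
      with * have "real (card J) * (real (m+1) * a n n) \<le> real (card J) * ((2 + 2*K) * G)"
        by (simp add: algebra_simps)
      thus ?thesis using cJpos by simp
    qed
    have split: "{0..n} = {0..<m} \<union> {m..n}" using mn by auto
    have "(\<Sum>k=0..n. a n k * sin ((real k + 1/2) * t))
        = (\<Sum>k\<in>{0..<m}. a n k * sin ((real k + 1/2) * t)) + (\<Sum>k\<in>{m..n}. a n k * sin ((real k + 1/2) * t))"
      unfolding split by (rule sum.union_disjoint) auto
    moreover have "\<bar>\<Sum>k\<in>{0..<m}. a n k * sin ((real k + 1/2) * t)\<bar> \<le> G"
    proof -
      have "\<bar>\<Sum>k\<in>{0..<m}. a n k * sin ((real k + 1/2) * t)\<bar> \<le> (\<Sum>k\<in>{0..<m}. a n k)"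
        by (rule sin_abs_sum_le[OF anonneg])
      also have "\<dots> \<le> G" unfolding G_def by (rule sum_sub_le[OF _ _ anonneg]) auto
      finally show ?thesis .
    qed
    moreover have "\<bar>\<Sum>k\<in>{m..n}. a n k * sin ((real k + 1/2) * t)\<bar> \<le> (real m + 1) * (D + a n n)"
      unfolding D_def
      by (rule abel_bound[where b="a n" and z="\<lambda>j. sin ((real j + 1/2) * t)" and B="real m + 1"]; (use m sin_partial_bound[OF s] anonneg in auto)?)
    moreover have "(real m + 1) * (D + a n n) \<le> K * G + (2 + 2*K) * G"
      using D_bound an_bound by (simp add: algebra_simps)
    ultimately show ?thesis unfolding G_def[symmetric] by (simp add: algebra_simps)
  qed
qed

lemma mh_kernel:
  assumes lts: "lower_tri_stoch a" and K0: "0 \<le> K"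
    and MH: "\<And>n m. m < n \<Longrightarrow> (\<Sum>k=0..n-m-1. \<bar>a n k - a n (k+1)\<bar>)
       \<le> K * (1 / real (m+1)) * (\<Sum>k=n-m..n. a n k)"
    and m: "m \<le> n"
    and s: "0 < sin (t/2)" "1 / sin (t/2) \<le> real m + 1"
  shows "\<bar>\<Sum>k=0..n. a n k * sin ((real k + 1/2) * t)\<bar> \<le> (3 + 3*K) * (\<Sum>k=n-m..n. a n k)"
proof -
  define G where "G = (\<Sum>k=n-m..n. a n k)"
  have anonneg: "\<And>k. 0 \<le> a n k" using lts_nonneg[OF lts] by blast
  have G0: "0 \<le> G" unfolding G_def by (intro sum_nonneg anonneg)
  show ?thesis
  proof (cases "m = n")
    case True
    have "\<bar>\<Sum>k=0..n. a n k * sin ((real k + 1/2) * t)\<bar> \<le> (\<Sum>k=0..n. a n k)"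
      by (rule sin_abs_sum_le[OF anonneg])
    also have "\<dots> \<le> (3 + 3*K) * (\<Sum>k=n-m..n. a n k)"
      using True G0 K0 unfolding G_def by (simp add: algebra_simps)
    finally show ?thesis .
  next
    case False
    hence mn: "m < n" using m by simp
    define L where "L = n - m - 1"
    define D where "D = (\<Sum>k\<in>{0..<L}. \<bar>a n k - a n (Suc k)\<bar>)"
    have Hle: "(\<Sum>k=j..n. a n k) \<le> G" if "n - m \<le> j" for j
      unfolding G_def by (rule sum_sub_le[OF _ _ anonneg]) (use that in auto)
    have D_bound: "real (m+1) * D \<le> K * G"
    proof -
      have "D \<le> (\<Sum>k=0..n-m-1. \<bar>a n k - a n (k+1)\<bar>)"
        unfolding D_def L_def Suc_eq_plus1 by (intro sum_mono2) auto
      also have "\<dots> \<le> K * (1 / real (m+1)) * G" using MH[OF mn] unfolding G_def by simp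
      finally show ?thesis by (simp add: field_simps)
    qed
    define J where "J = {n - m..n - m div 2}"
    have avg: "real (m+1) * a n L \<le> real (m+1) * a n j + 2 * K * G" if "j \<in> J" for j
    proof -
      have j: "n - m \<le> j" "j \<le> n - m div 2" using that unfolding J_def by auto
      have Lj: "L \<le> j" using j mn unfolding L_def by simp
      have nj: "n - j < n" using j mn by auto
      have t1: "a n L \<le> a n j + (\<Sum>k\<in>{L..<j}. \<bar>a n k - a n (Suc k)\<bar>)"
        using telescope_bound2[where b="a n" and i=L and N=j] Lj by simp
      have t2: "(\<Sum>k\<in>{L..<j}. \<bar>a n k - a n (Suc k)\<bar>) \<le> (\<Sum>k=0..n-(n-j)-1. \<bar>a n k - a n (k+1)\<bar>)"
      proof -
        have "n-(n-j)-1 = j - 1" using j mn by auto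
        moreover have "{L..<j} \<subseteq> {0..j-1}" by auto
        ultimately show ?thesis by (simp, intro sum_sub_le) auto
      qed
      also have "\<dots> \<le> K * (1 / real (n-j+1)) * (\<Sum>k=n-(n-j)..n. a n k)" by (rule MH[OF nj])
      also have "\<dots> \<le> K * (1 / real (n-j+1)) * G"
        using Hle[of "n-(n-j)"] j mn K0 by (intro mult_left_mono) auto
      finally have t3: "(\<Sum>k\<in>{L..<j}. \<bar>a n k - a n (Suc k)\<bar>) \<le> K * (1 / real (n-j+1)) * G" .
      have "a n L \<le> a n j + K * (1 / real (n-j+1)) * G" using t1 t3 by linarith
      hence "real (m+1) * a n L \<le> real (m+1) * (a n j + K * (1 / real (n-j+1)) * G)"
        by (rule mult_left_mono) simp
      hence "real (m+1) * a n L \<le> real (m+1) * a n j + real (m+1) * (K * (1 / real (n-j+1)) * G)"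
        by (simp add: distrib_left)
      also have "real (m+1) * (K * (1 / real (n-j+1)) * G) \<le> 2 * K * G"
      proof -
        have "m+1 \<le> 2 * (n-j+1)" using j mn by presburger
        hence "real (m+1) \<le> 2 * real (n-j+1)" by linarith
        hence "real (m+1) / real (n-j+1) \<le> 2" by (simp add: field_simps)
        hence "real (m+1) / real (n-j+1) * (K * G) \<le> 2 * (K * G)"
          using K0 G0 by (intro mult_right_mono) auto
        thus ?thesis by (simp add: field_simps)
      qed
      finally show ?thesis by simp
    qed
    have aJ: "(\<Sum>j\<in>J. a n j) \<le> G" unfolding G_def J_def by (rule sum_sub_le[OF _ _ anonneg]) auto
    have an_bound: "real (m+1) * a n L \<le> (2 + 2*K) * G"
    proof -
      have "real (card J) * (real (m+1) * a n L) \<le> (\<Sum>j\<in>J. real (m+1) * a n j + 2 * K * G)"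
        using sum_mono[OF avg, of J] by simp
      also have "\<dots> = real (m+1) * (\<Sum>j\<in>J. a n j) + real (card J) * (2 * K * G)"
        by (simp add: sum.distrib sum_distrib_left)
      also have "\<dots> \<le> real (m+1) * G + real (card J) * (2 * K * G)"
        using aJ by (intro add_right_mono mult_left_mono) auto
      finally have *: "real (card J) * (real (m+1) * a n L) \<le> real (m+1) * G + real (card J) * (2 * K * G)" .
      have cJ: "real (m+1) \<le> 2 * real (card J)" unfolding J_def by (rule card_half_upper[OF m])
      have cJpos: "0 < real (card J)" using cJ by linarith
      have "real (m+1) * G \<le> 2 * real (card J) * G" using cJ G0 by (intro mult_right_mono) auto
      with * have "real (card J) * (real (m+1) * a n L) \<le> real (card J) * ((2 + 2*K) * G)"
        by (simp add: algebra_simps)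
      thus ?thesis using cJpos by simp
    qed
    have split: "{0..n} = {0..L} \<union> {n-m..n}" using mn unfolding L_def by auto
    have "(\<Sum>k=0..n. a n k * sin ((real k + 1/2) * t))
        = (\<Sum>k\<in>{0..L}. a n k * sin ((real k + 1/2) * t)) + (\<Sum>k\<in>{n-m..n}. a n k * sin ((real k + 1/2) * t))"
      unfolding split by (rule sum.union_disjoint) (use mn in \<open>auto simp: L_def\<close>)
    moreover have "\<bar>\<Sum>k\<in>{n-m..n}. a n k * sin ((real k + 1/2) * t)\<bar> \<le> G"
      unfolding G_def by (rule sin_abs_sum_le[OF anonneg])
    moreover have "\<bar>\<Sum>k\<in>{0..L}. a n k * sin ((real k + 1/2) * t)\<bar> \<le> (real m + 1) * (D + a n L)"
      unfolding D_def
      by (rule abel_bound[where b="a n" and z="\<lambda>j. sin ((real j + 1/2) * t)" and B="real m + 1"]; (use sin_partial_bound[OF s] anonneg in auto)?)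
    moreover have "(real m + 1) * (D + a n L) \<le> K * G + (2 + 2*K) * G"
      using D_bound an_bound by (simp add: algebra_simps)
    ultimately show ?thesis unfolding G_def[symmetric] by (simp add: algebra_simps)
  qed
qed

definition II :: "real set \<Rightarrow> (real \<Rightarrow> real) \<Rightarrow> real" where
  "II S g = integral\<^sup>L lborel (\<lambda>s. indicator S s * g s)"

definition IB :: "real set \<Rightarrow> (real \<Rightarrow> real) \<Rightarrow> bool" where
  "IB S g \<longleftrightarrow> integrable lborel (\<lambda>s. indicator S s * g s)"

lemma LBINT_II: "a \<le> b \<Longrightarrow> (LBINT t=a..b. g t) = II {a..b} g"
  unfolding II_def by (simp add: interval_integral_Icc set_lebesgue_integral_def)

lemma IB_mult_bdd:
  assumes "IB S g" "h \<in> borel_measurable borel" "\<And>s. \<bar>h s\<bar> \<le> B" "S \<in> sets borel" "g \<in> borel_measurable borel"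
  shows "IB S (\<lambda>s. g s * h s)"
proof -
  have i1: "integrable lborel (\<lambda>s. B * (indicator S s * g s))"
    using assms(1) unfolding IB_def by simp
  have ae: "AE s in lborel. norm (indicator S s * (g s * h s)) \<le> norm (B * (indicator S s * g s))"
  proof (rule AE_I2)
    fix s
    have B0: "0 \<le> B" using assms(3)[of s] by linarith
    have "\<bar>indicator S s * (g s * h s)\<bar> = \<bar>indicator S s * g s\<bar> * \<bar>h s\<bar>" by (simp add: abs_mult)
    also have "\<dots> \<le> \<bar>indicator S s * g s\<bar> * B" by (intro mult_left_mono assms(3)) simp
    finally show "norm (indicator S s * (g s * h s)) \<le> norm (B * (indicator S s * g s))"
      using B0 by (simp add: abs_mult mult.commute)
  qed
  show ?thesis unfolding IB_def
    by (rule Bochner_Integration.integrable_bound[OF i1 _ ae]) (use assms in simp)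
qed

lemma IB_subset:
  assumes "IB T g" "S \<subseteq> T" "S \<in> sets borel"
  shows "IB S g"
proof -
  have "integrable lborel (\<lambda>x. indicator S x *\<^sub>R (indicator T x * g x))"
    using assms unfolding IB_def by (intro integrable_mult_indicator) auto
  moreover have "(\<lambda>x. indicator S x *\<^sub>R (indicator T x * g x)) = (\<lambda>x. indicator S x * g x)"
    using assms(2) by (auto simp: indicator_def fun_eq_iff)
  ultimately show ?thesis unfolding IB_def by simp
qed

lemma Lp_IB:
  assumes "Lp_periodic p f" "1 \<le> p"
  shows "IB {-pi..pi} f" "f \<in> borel_measurable borel"
proof -
  show fm: "f \<in> borel_measurable borel" using assms unfolding Lp_periodic_def by simp
  have i0: "integrable lborel (\<lambda>t. indicator {-pi..pi} t *\<^sub>R (\<bar>f t\<bar> powr p))"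
    using assms unfolding Lp_periodic_def set_integrable_def by simp
  have i00: "integrable lborel (indicator {-pi..pi} :: real \<Rightarrow> real)"
    by (rule integrable_real_indicator) auto
  have i1: "integrable lborel (\<lambda>t. indicator {-pi..pi} t * (1::real) + indicator {-pi..pi} t * (\<bar>f t\<bar> powr p))"
    using Bochner_Integration.integrable_add[OF i00 i0] by simp
  have ae: "AE t in lborel. norm (indicator {-pi..pi} t * f t) \<le>
      norm (indicator {-pi..pi} t * (1::real) + indicator {-pi..pi} t * (\<bar>f t\<bar> powr p))"
  proof (rule AE_I2)
    fix t
    have "\<bar>f t\<bar> \<le> 1 + \<bar>f t\<bar> powr p"
    proof (cases "\<bar>f t\<bar> \<le> 1")
      case True then show ?thesis by (simp add: add_increasing2)
    next
      case False
      hence "\<bar>f t\<bar> powr 1 \<le> \<bar>f t\<bar> powr p" using assms(2) by (intro powr_mono) auto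
      thus ?thesis using False by simp
    qed
    thus "norm (indicator {-pi..pi} t * f t) \<le>
      norm (indicator {-pi..pi} t * (1::real) + indicator {-pi..pi} t * (\<bar>f t\<bar> powr p))"
      by (auto simp: indicator_def)
  qed
  show "IB {-pi..pi} f" unfolding IB_def
    by (rule Bochner_Integration.integrable_bound[OF i1 _ ae]) (use fm in simp)
qed

lemma int_shift: "integral\<^sup>L lborel (h::real\<Rightarrow>real) = integral\<^sup>L lborel (\<lambda>u. h (t + u))"
  using lborel_integral_real_affine[of 1 h t] by simp

lemma intb_shift: "integrable lborel (h::real\<Rightarrow>real) \<longleftrightarrow> integrable lborel (\<lambda>u. h (t + u))"
  using lborel_integrable_real_affine_iff[of 1 h t] by simp

lemma int_refl: "integral\<^sup>L lborel (h::real\<Rightarrow>real) = integral\<^sup>L lborel (\<lambda>u. h (- u))"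
  using lborel_integral_real_affine[of "-1" h 0] by simp

lemma intb_refl: "integrable lborel (h::real\<Rightarrow>real) \<longleftrightarrow> integrable lborel (\<lambda>u. h (- u))"
  using lborel_integrable_real_affine_iff[of "-1" h 0] by simp

lemma per_int:
  fixes g :: "real \<Rightarrow> real"
  assumes per: "\<And>s. g (s + 2*pi) = g s"
  shows "g (s + 2*pi*real_of_int j) = g s"
proof -
  have nat: "g (s + 2*pi*real k) = g s" for s k
  proof (induction k arbitrary: s)
    case 0 then show ?case by simp
  next
    case (Suc k)
    have "s + 2*pi*real (Suc k) = (s + 2*pi*real k) + 2*pi" by (simp add: algebra_simps)
    hence "g (s + 2*pi*real (Suc k)) = g ((s + 2*pi*real k) + 2*pi)" by (simp only:)
    also have "\<dots> = g (s + 2*pi*real k)" by (rule per)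
    also have "\<dots> = g s" by (rule Suc)
    finally show ?case .
  qed
  show ?thesis
  proof (cases "j \<ge> 0")
    case True
    define k where "k = nat j"
    have "j = int k" using True unfolding k_def by simp
    then show ?thesis using nat by simp
  next
    case False
    define k where "k = nat (-j)"
    have k: "j = - int k" using False unfolding k_def by simp
    have "g s = g ((s - 2*pi*real k) + 2*pi*real k)" by simp
    also have "\<dots> = g (s - 2*pi*real k)" by (rule nat)
    finally show ?thesis using k by simp
  qed
qed

lemma II_split:
  assumes "IB S g" "IB T g" "S \<inter> T = {}"
  shows "II (S \<union> T) g = II S g + II T g" "IB (S \<union> T) g"
proof -
  have e: "(\<lambda>s. indicator (S \<union> T) s * g s) = (\<lambda>s. indicator S s * g s + indicator T s * g s)"
    using assms(3) by (auto simp: indicator_def fun_eq_iff)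
  show "II (S \<union> T) g = II S g + II T g" unfolding II_def e
    using assms unfolding IB_def by (simp add: Bochner_Integration.integral_add)
  show "IB (S \<union> T) g" unfolding IB_def e using assms unfolding IB_def by simp
qed

lemma per_shift_base:
  fixes g :: "real \<Rightarrow> real"
  assumes per: "\<And>s. g (s + 2*pi) = g s" and gm: "g \<in> borel_measurable borel"
    and gi: "IB {-pi..<pi} g" and c: "-pi \<le> c" "c \<le> pi"
  shows "IB {c..<c+2*pi} g \<and> II {c..<c+2*pi} g = II {-pi..<pi} g"
proof -
  have i1: "IB {c..<pi} g" by (rule IB_subset[OF gi]) (use c in auto)
  have i2: "IB {-pi..<c} g" by (rule IB_subset[OF gi]) (use c in auto)
  have sh: "(\<lambda>u. indicator {pi..<c+2*pi} (2*pi + u) * g (2*pi + u)) = (\<lambda>u. indicator {-pi..<c} u * g u)"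
  proof
    fix u
    have "g (2*pi + u) = g u" using per[of u] by (simp add: add.commute)
    moreover have "indicator {pi..<c+2*pi} (2*pi + u) = (indicator {-pi..<c} u :: real)"
      by (auto simp: indicator_def)
    ultimately show "indicator {pi..<c+2*pi} (2*pi + u) * g (2*pi + u) = indicator {-pi..<c} u * g u" by simp
  qed
  have i3: "IB {pi..<c+2*pi} g" unfolding IB_def
    by (subst intb_shift[where t="2*pi"], unfold sh) (use i2 in \<open>simp add: IB_def\<close>)
  have v3: "II {pi..<c+2*pi} g = II {-pi..<c} g" unfolding II_def
    by (subst int_shift[where t="2*pi"], unfold sh) simp
  have u1: "{c..<c+2*pi} = {c..<pi} \<union> {pi..<c+2*pi}" using c by auto
  have u2: "{-pi..<pi} = {-pi..<c} \<union> {c..<pi}" using c by auto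
  show ?thesis unfolding u1
    using II_split[OF i1 i3] II_split[OF i2 i1] v3 u2 by auto
qed

lemma per_shift_int:
  fixes g :: "real \<Rightarrow> real"
  assumes per: "\<And>s. g (s + 2*pi) = g s" and gi: "IB {c..<c+2*pi} g"
  shows "IB {c+2*pi*real_of_int j..<c+2*pi*real_of_int j+2*pi} g \<and>
         II {c+2*pi*real_of_int j..<c+2*pi*real_of_int j+2*pi} g = II {c..<c+2*pi} g"
proof -
  define d where "d = 2*pi*real_of_int j"
  have sh: "(\<lambda>u. indicator {c+d..<c+d+2*pi} (d + u) * g (d + u)) = (\<lambda>u. indicator {c..<c+2*pi} u * g u)"
  proof
    fix u
    have "g (d + u) = g u" using per_int[where g=g, OF per, of u j] unfolding d_def by (simp add: add.commute)
    moreover have "indicator {c+d..<c+d+2*pi} (d + u) = (indicator {c..<c+2*pi} u :: real)"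
      by (auto simp: indicator_def)
    ultimately show "indicator {c+d..<c+d+2*pi} (d + u) * g (d + u) = indicator {c..<c+2*pi} u * g u" by simp
  qed
  have "IB {c+d..<c+d+2*pi} g" unfolding IB_def
    by (subst intb_shift[where t="d"], unfold sh) (use gi in \<open>simp add: IB_def\<close>)
  moreover have "II {c+d..<c+d+2*pi} g = II {c..<c+2*pi} g" unfolding II_def
    by (subst int_shift[where t="d"], unfold sh) simp
  ultimately show ?thesis unfolding d_def by simp
qed

lemma per_shift:
  fixes g :: "real \<Rightarrow> real"
  assumes per: "\<And>s. g (s + 2*pi) = g s" and gm: "g \<in> borel_measurable borel"
    and gi: "IB {-pi..<pi} g"
  shows "IB {c..<c+2*pi} g \<and> II {c..<c+2*pi} g = II {-pi..<pi} g"
proof -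
  define j where "j = \<lfloor>(c + pi) / (2*pi)\<rfloor>"
  define c0 where "c0 = c - 2*pi*real_of_int j"
  have "real_of_int j \<le> (c + pi) / (2*pi)" "(c + pi) / (2*pi) < real_of_int j + 1"
    unfolding j_def by linarith+
  hence "2*pi*real_of_int j \<le> c + pi" "c + pi < 2*pi*real_of_int j + 2*pi"
    by (simp_all add: field_simps)
  hence c0: "-pi \<le> c0" "c0 \<le> pi" unfolding c0_def by linarith+
  have b: "IB {c0..<c0+2*pi} g \<and> II {c0..<c0+2*pi} g = II {-pi..<pi} g"
    by (rule per_shift_base[OF per gm gi c0])
  have "c = c0 + 2*pi*real_of_int j" unfolding c0_def by simp
  thus ?thesis using per_shift_int[OF per conjunct1[OF b], of j] b by simp
qed

lemma Dk_cont: "continuous_on UNIV (Dk k)"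
  unfolding Dk_def by (intro continuous_intros)

lemma Dk_meas[measurable]: "Dk k \<in> borel_measurable borel"
  by (rule borel_measurable_continuous_onI[OF Dk_cont])

lemma cos_jper: "cos (real j * (y + 2*pi)) = cos (real j * y)"
proof -
  have "real j * (y + 2*pi) = real j * y + 2 * real j * pi" by (simp add: algebra_simps)
  thus ?thesis by (simp add: cos_add)
qed

lemma Dk_per: "Dk k (y + 2*pi) = Dk k y"
  unfolding Dk_def using cos_jper by simp

lemma Dk_even: "Dk k (- y) = Dk k y"
  unfolding Dk_def by simp

lemma II_ae:
  assumes "\<And>s. s \<noteq> a \<Longrightarrow> s \<noteq> b \<Longrightarrow> indicator S s = (indicator T s :: real)"
    "g \<in> borel_measurable borel" "S \<in> sets borel" "T \<in> sets borel"
  shows "II S g = II T g" "IB S g \<longleftrightarrow> IB T g"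
proof -
  have ae: "AE s in lborel. indicator S s * g s = indicator T s * g s"
    using AE_lborel_singleton[of a] AE_lborel_singleton[of b]
    by eventually_elim (use assms(1) in simp)
  show "II S g = II T g" unfolding II_def
    by (rule integral_cong_AE[OF _ _ ae]) (use assms in simp_all)
  show "IB S g \<longleftrightarrow> IB T g" unfolding IB_def
    by (rule integrable_cong_AE[OF _ _ ae]) (use assms in simp_all)
qed

lemma IB_const: "IB {a..b} (\<lambda>_. c)"
proof -
  have "emeasure lborel {a..b} < top" by (cases "a \<le> b") auto
  hence "integrable lborel (\<lambda>s. c * indicator {a..b} s :: real)"
    by (intro integrable_mult_right integrable_real_indicator) auto
  thus ?thesis unfolding IB_def by (simp add: mult.commute)
qed

lemma II_const: "a \<le> b \<Longrightarrow> II {a..b} (\<lambda>_. c) = c * (b - a)"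
proof -
  assume ab: "a \<le> b"
  have "II {a..b} (\<lambda>_. c) = integral\<^sup>L lborel (\<lambda>s. c * indicator {a..b} s)"
    unfolding II_def by (simp add: mult.commute)
  also have "\<dots> = c * (b - a)" using ab by simp
  finally show ?thesis .
qed

lemma IB_add: "IB S g \<Longrightarrow> IB S h \<Longrightarrow> IB S (\<lambda>s. g s + h s)"
  unfolding IB_def by (simp add: algebra_simps)
lemma IB_diff: "IB S g \<Longrightarrow> IB S h \<Longrightarrow> IB S (\<lambda>s. g s - h s)"
  unfolding IB_def by (simp add: algebra_simps)
lemma IB_cmult: "IB S g \<Longrightarrow> IB S (\<lambda>s. c * g s)"
  unfolding IB_def by (simp add: algebra_simps)
lemma II_add: "IB S g \<Longrightarrow> IB S h \<Longrightarrow> II S (\<lambda>s. g s + h s) = II S g + II S h"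
  unfolding IB_def II_def by (simp add: algebra_simps Bochner_Integration.integral_add)
lemma II_diff: "IB S g \<Longrightarrow> IB S h \<Longrightarrow> II S (\<lambda>s. g s - h s) = II S g - II S h"
  unfolding IB_def II_def by (simp add: algebra_simps Bochner_Integration.integral_diff)
lemma II_cmult: "II S (\<lambda>s. c * g s) = c * II S g"
  unfolding II_def by (simp add: algebra_simps)

lemma II_sum:
  assumes "\<And>j. j \<in> A \<Longrightarrow> IB S (g j)"
  shows "II S (\<lambda>s. \<Sum>j\<in>A. g j s) = (\<Sum>j\<in>A. II S (g j))" "IB S (\<lambda>s. \<Sum>j\<in>A. g j s)"
proof -
  have e: "(\<lambda>s. indicator S s * (\<Sum>j\<in>A. g j s)) = (\<lambda>s. \<Sum>j\<in>A. indicator S s * g j s)"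
    by (simp add: sum_distrib_left)
  show "II S (\<lambda>s. \<Sum>j\<in>A. g j s) = (\<Sum>j\<in>A. II S (g j))" unfolding II_def e
    by (rule Bochner_Integration.integral_sum) (use assms in \<open>simp add: IB_def\<close>)
  show "IB S (\<lambda>s. \<Sum>j\<in>A. g j s)" unfolding IB_def e
    by (rule Bochner_Integration.integrable_sum) (use assms in \<open>simp add: IB_def\<close>)
qed

lemma II_cos: "1 \<le> j \<Longrightarrow> II {0..pi} (\<lambda>u. cos (real j * u)) = 0"
proof -
  assume j: "1 \<le> j"
  have "(LBINT u=ereal 0..ereal pi. cos (real j * u)) = sin (real j * pi) / real j - sin (real j * 0) / real j"
    by (rule interval_integral_FTC_finite[where F="\<lambda>u. sin (real j * u) / real j" and f="\<lambda>u. cos (real j * u)"])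
       (use j in \<open>auto intro!: continuous_intros derivative_eq_intros simp: has_real_derivative_iff_has_vector_derivative[symmetric]\<close>)
  thus ?thesis using LBINT_II[of 0 pi "\<lambda>u. cos (real j * u)"] by simp
qed

lemma II_Dk: "II {0..pi} (Dk k) = pi / 2"
proof -
  have ib: "IB {0..pi} (\<lambda>u. cos (real j * u))" for j
    using IB_mult_bdd[OF IB_const[of 0 pi 1], of "\<lambda>u. cos (real j * u)" 1] by simp
  have "II {0..pi} (Dk k) = II {0..pi} (\<lambda>u. 1/2 + (\<Sum>j=1..k. cos (real j * u)))"
    unfolding Dk_def by simp
  also have "\<dots> = II {0..pi} (\<lambda>_. 1/2) + II {0..pi} (\<lambda>u. \<Sum>j=1..k. cos (real j * u))"
    by (rule II_add[OF IB_const II_sum(2)]) (use ib in auto)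
  also have "II {0..pi} (\<lambda>u. \<Sum>j=1..k. cos (real j * u)) = (\<Sum>j=1..k. II {0..pi} (\<lambda>u. cos (real j * u)))"
    by (rule II_sum(1)) (use ib in auto)
  also have "\<dots> = 0" by (intro sum.neutral) (auto intro: II_cos)
  finally show ?thesis by (simp add: II_const)
qed

lemma ps_rep:
  assumes fm: "f \<in> borel_measurable borel" and fi: "IB {-pi..pi} f"
  shows "partial_sum f k x = II {-pi..pi} (\<lambda>s. f s * Dk k (s - x)) / pi"
proof -
  define S where "S = {-pi..pi}"
  have ibc: "IB S (\<lambda>s. f s * cos (real j * s))" for j
    using IB_mult_bdd[OF fi[folded S_def], of "\<lambda>s. cos (real j * s)" 1] fm unfolding S_def by simp
  have ibs: "IB S (\<lambda>s. f s * sin (real j * s))" for j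
    using IB_mult_bdd[OF fi[folded S_def], of "\<lambda>s. sin (real j * s)" 1] fm unfolding S_def by simp
  have fa: "fourier_a f j = II S (\<lambda>s. f s * cos (real j * s)) / pi" for j
    unfolding fourier_a_def S_def by (simp add: LBINT_II)
  have fb: "fourier_b f j = II S (\<lambda>s. f s * sin (real j * s)) / pi" for j
    unfolding fourier_b_def S_def by (simp add: LBINT_II)
  define T where "T j s = cos (real j * x) * (f s * cos (real j * s)) + sin (real j * x) * (f s * sin (real j * s))" for j s
  have pw: "f s * Dk k (s - x) = 1/2 * f s + (\<Sum>j=1..k. T j s)" for s
  proof -
    have "cos (real j * (s - x)) = cos (real j * s) * cos (real j * x) + sin (real j * s) * sin (real j * x)" for j
      by (simp add: right_diff_distrib cos_diff)
    hence "f s * Dk k (s - x) = f s * (1/2 + (\<Sum>j=1..k. cos (real j * s) * cos (real j * x) + sin (real j * s) * sin (real j * x)))"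
      unfolding Dk_def by simp
    also have "\<dots> = 1/2 * f s + (\<Sum>j=1..k. T j s)"
      unfolding T_def by (simp add: algebra_simps sum_distrib_left)
    finally show ?thesis .
  qed
  have ibT: "IB S (T j)" for j
    unfolding T_def by (intro IB_add IB_cmult ibc ibs)
  have fi': "IB S f" using fi unfolding S_def .
  have TT: "II S (T j) = cos (real j * x) * II S (\<lambda>s. f s * cos (real j * s)) + sin (real j * x) * II S (\<lambda>s. f s * sin (real j * s))" for j
    unfolding T_def using II_add[OF IB_cmult[OF ibc] IB_cmult[OF ibs]] II_cmult
    by simp
  have "II S (\<lambda>s. f s * Dk k (s - x)) = II S (\<lambda>s. 1/2 * f s + (\<Sum>j=1..k. T j s))"
    by (simp add: pw)
  also have "\<dots> = II S (\<lambda>s. 1/2 * f s) + II S (\<lambda>s. \<Sum>j=1..k. T j s)"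
    by (rule II_add[OF IB_cmult[OF fi'] II_sum(2)]) (use ibT in auto)
  also have "\<dots> = 1/2 * II S f + (\<Sum>j=1..k. II S (T j))"
    by (subst II_cmult, subst II_sum(1)) (use ibT in auto)
  also have "\<dots> = 1/2 * II S f + (\<Sum>j=1..k. cos (real j * x) * II S (\<lambda>s. f s * cos (real j * s)) + sin (real j * x) * II S (\<lambda>s. f s * sin (real j * s)))"
    using TT by simp
  finally have *: "II S (\<lambda>s. f s * Dk k (s - x)) = 1/2 * II S f + (\<Sum>j=1..k. cos (real j * x) * II S (\<lambda>s. f s * cos (real j * s)) + sin (real j * x) * II S (\<lambda>s. f s * sin (real j * s)))" .
  show ?thesis
    unfolding partial_sum_def fa fb S_def[symmetric] * 
    by (simp add: add_divide_distrib sum_divide_distrib algebra_simps)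
qed

lemma rep:
  assumes Lp: "Lp_periodic p f" "1 \<le> p"
  shows "IB {0..pi} (\<lambda>u. phi f x u * Dk k u)"
    "partial_sum f k x - f x = II {0..pi} (\<lambda>u. phi f x u * Dk k u) / pi"
proof -
  have fm[measurable]: "f \<in> borel_measurable borel" and fi: "IB {-pi..pi} f" using Lp_IB[OF Lp] by auto
  have per_f: "\<And>t. f (t + 2*pi) = f t" using Lp(1) unfolding Lp_periodic_def by auto
  define h where "h s = f s * Dk k (s - x)" for s
  have h_per: "h (s + 2*pi) = h s" for s
  proof -
    have "Dk k (s + 2*pi - x) = Dk k ((s - x) + 2*pi)" by (rule arg_cong[where f="Dk k"]) simp
    hence "Dk k (s + 2*pi - x) = Dk k (s - x)" using Dk_per[of k "s - x"] by simp
    thus ?thesis unfolding h_def using per_f[of s] by simp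
  qed
  have h_meas[measurable]: "h \<in> borel_measurable borel" unfolding h_def by measurable
  have ibh: "IB {-pi..pi} h" unfolding h_def
    by (rule IB_mult_bdd[OF fi _ Dk_bound]) auto
  have ind1: "\<And>s. s \<noteq> pi \<Longrightarrow> s \<noteq> pi \<Longrightarrow> indicator {-pi..pi} s = (indicator {-pi..<pi} s :: real)"
    by (auto simp: indicator_def)
  have ibh': "IB {-pi..<pi} h" using II_ae(2)[OF ind1 h_meas] ibh by simp
  have eq0: "II {-pi..pi} h = II {-pi..<pi} h"
    using II_ae(1)[OF ind1 h_meas] by simp
  have ps: "IB {x-pi..<x-pi+2*pi} h \<and> II {x-pi..<x-pi+2*pi} h = II {-pi..<pi} h"
    by (rule per_shift[OF h_per h_meas ibh'])
  define g1 where "g1 u = f (x + u) * Dk k u" for u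
  define g2 where "g2 u = f (x - u) * Dk k u" for u
  have g1m[measurable]: "g1 \<in> borel_measurable borel" unfolding g1_def by measurable
  have g2m[measurable]: "g2 \<in> borel_measurable borel" unfolding g2_def by measurable
  have sh: "(\<lambda>u. indicator {x-pi..<x-pi+2*pi} (x+u) * h (x+u)) = (\<lambda>u. indicator {-pi..<pi} u * g1 u)"
    unfolding h_def g1_def by (auto simp: indicator_def fun_eq_iff)
  have ib1: "IB {-pi..<pi} g1" unfolding IB_def
    using ps unfolding IB_def by (subst (asm) intb_shift[where t=x], unfold sh) simp
  have v1: "II {-pi..<pi} g1 = II {-pi..pi} h" unfolding eq0
    using ps unfolding II_def by (subst (asm) int_shift[where t=x], unfold sh) simp
  have ib1a: "IB {-pi..<0} g1" by (rule IB_subset[OF ib1]) auto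
  have ib1b: "IB {0..<pi} g1" by (rule IB_subset[OF ib1]) auto
  have v1s: "II {-pi..<pi} g1 = II {-pi..<0} g1 + II {0..<pi} g1"
  proof -
    have "{-pi..<pi} = {-pi..<0} \<union> {0..<pi}" by auto
    thus ?thesis using II_split(1)[OF ib1a ib1b] by auto
  qed
  have rf: "(\<lambda>v. indicator {-pi..<0} (-v) * g1 (-v)) = (\<lambda>v. indicator {0<..pi} v * g2 v)"
    unfolding g1_def g2_def by (auto simp: indicator_def fun_eq_iff Dk_even)
  have ib2: "IB {0<..pi} g2"
    using ib1a unfolding IB_def by (subst (asm) intb_refl, unfold rf) simp
  have v2: "II {-pi..<0} g1 = II {0<..pi} g2"
    unfolding II_def by (subst int_refl, unfold rf) simp
  have ind2: "\<And>s. s \<noteq> 0 \<Longrightarrow> s \<noteq> 0 \<Longrightarrow> indicator {0<..pi} s = (indicator {0..pi} s :: real)"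
    by (auto simp: indicator_def)
  have ib2': "IB {0..pi} g2" using II_ae(2)[OF ind2 g2m] ib2 by simp
  have v2': "II {0<..pi} g2 = II {0..pi} g2"
    using II_ae(1)[OF ind2 g2m] by simp
  have ind3: "\<And>s. s \<noteq> pi \<Longrightarrow> s \<noteq> pi \<Longrightarrow> indicator {0..<pi} s = (indicator {0..pi} s :: real)"
    by (auto simp: indicator_def)
  have ib1': "IB {0..pi} g1" using II_ae(2)[OF ind3 g1m] ib1b by simp
  have v1': "II {0..<pi} g1 = II {0..pi} g1"
    using II_ae(1)[OF ind3 g1m] by simp
  have ibD: "IB {0..pi} (Dk k)"
    using IB_mult_bdd[OF IB_const[of 0 pi 1] _ Dk_bound, of k] by simp
  have pw: "(\<lambda>u. phi f x u * Dk k u) = (\<lambda>u. (g1 u + g2 u) - 2 * f x * Dk k u)"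
    unfolding g1_def g2_def phi_def by (auto simp: fun_eq_iff algebra_simps)
  have ib12: "IB {0..pi} (\<lambda>u. g1 u + g2 u)" by (rule IB_add[OF ib1' ib2'])
  show "IB {0..pi} (\<lambda>u. phi f x u * Dk k u)" unfolding pw
    by (rule IB_diff[OF ib12 IB_cmult[OF ibD]])
  have "II {0..pi} (\<lambda>u. phi f x u * Dk k u) = II {0..pi} g1 + II {0..pi} g2 - 2 * f x * (pi/2)"
    unfolding pw II_diff[OF ib12 IB_cmult[OF ibD]] II_add[OF ib1' ib2'] II_cmult II_Dk by simp
  moreover have "partial_sum f k x = (II {0..pi} g1 + II {0..pi} g2) / pi"
    unfolding ps_rep[OF fm fi] h_def[symmetric] v1[symmetric] v1s v2 v2' v1' by simp
  ultimately show "partial_sum f k x - f x = II {0..pi} (\<lambda>u. phi f x u * Dk k u) / pi"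
    by (simp add: field_simps)
qed

lemma jordan:
  assumes "0 \<le> t" "t \<le> pi"
  shows "t / pi \<le> sin (t/2)"
proof -
  have cv: "convex_on {0..pi} (\<lambda>y. - sin y)"
    by (rule f''_ge0_imp_convex[where f'="\<lambda>y. - cos y" and f''="\<lambda>y. sin y"])
       (auto intro!: derivative_eq_intros sin_ge_zero)
  define \<mu> where "\<mu> = t / pi"
  have mu: "0 \<le> \<mu>" "\<mu> \<le> 1" using assms unfolding \<mu>_def by (auto simp: field_simps)
  have "- sin ((1 - \<mu>) *\<^sub>R 0 + \<mu> *\<^sub>R (pi/2)) \<le> (1 - \<mu>) * (- sin 0) + \<mu> * (- sin (pi/2))"
    by (rule convex_onD[OF cv]) (use mu in auto)
  moreover have "(1 - \<mu>) *\<^sub>R 0 + \<mu> *\<^sub>R (pi/2) = t/2" unfolding \<mu>_def by simp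
  ultimately show ?thesis unfolding \<mu>_def by simp
qed

lemma holder_nn:
  fixes F g :: "real \<Rightarrow> real" and p q V :: real
  assumes p: "1 < p" and q: "q = p / (p - 1)"
    and Fm: "F \<in> borel_measurable borel" and gm: "g \<in> borel_measurable borel"
    and F0: "\<And>t. 0 \<le> F t" and g0: "\<And>t. 0 \<le> g t"
    and Ffin: "(\<integral>\<^sup>+ t. ennreal (F t powr p) \<partial>lborel) \<noteq> \<infinity>"
    and gV: "(\<integral>\<^sup>+ t. ennreal (g t powr q) \<partial>lborel) \<le> ennreal V" and V: "0 < V"
  shows "(\<integral>\<^sup>+ t. ennreal (F t * g t) \<partial>lborel)
      \<le> ennreal (enn2real (\<integral>\<^sup>+ t. ennreal (F t powr p) \<partial>lborel) powr (1/p) * V powr (1/q))"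
proof -
  define A where "A = enn2real (\<integral>\<^sup>+ t. ennreal (F t powr p) \<partial>lborel)"
  have A0: "0 \<le> A" unfolding A_def by simp
  have IA: "(\<integral>\<^sup>+ t. ennreal (F t powr p) \<partial>lborel) = ennreal A"
    unfolding A_def using Ffin by (simp add: ennreal_enn2real_if)
  have q1: "1 < q" "1/p + 1/q = 1" using p unfolding q by (auto simp: field_simps)
  show ?thesis
  proof (cases "A = 0")
    case True
    hence "(\<integral>\<^sup>+ t. ennreal (F t powr p) \<partial>lborel) = 0" using IA by simp
    hence "AE t in lborel. ennreal (F t powr p) = 0"
      by (subst (asm) nn_integral_0_iff_AE) (use Fm in auto)
    hence "AE t in lborel. ennreal (F t * g t) = 0"
      by (rule eventually_mono) (use F0 in \<open>auto simp: powr_eq_0_iff\<close>)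
    hence "(\<integral>\<^sup>+ t. ennreal (F t * g t) \<partial>lborel) = 0"
      by (subst nn_integral_0_iff_AE) (use Fm gm in auto)
    thus ?thesis by simp
  next
    case False
    hence Apos: "0 < A" using A0 by simp
    define a where "a = ln A"
    define v where "v = ln V"
    define lam where "lam = exp (((v - a) / q) / p)"
    have lam0: "0 < lam" unfolding lam_def by simp
    have lp: "lam powr p = exp ((v - a) / q)" unfolding lam_def powr_def using p by simp
    have lq: "lam powr q = exp ((v - a) / p)"
    proof -
      have "q * ((v - a) / q / p) = (v - a) / p" using q1 by simp
      thus ?thesis unfolding lam_def powr_def by simp
    qed
    have avp: "a / p + a / q = a" "v / p + v / q = v"
    proof -
      have "a * (1/p + 1/q) = a" "v * (1/p + 1/q) = v" using q1(2) by simp_all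
      thus "a / p + a / q = a" "v / p + v / q = v" by (simp_all add: distrib_left)
    qed
    have young: "F t * g t \<le> lam powr p * F t powr p / p + g t powr q / lam powr q / q" for t
    proof -
      have "(lam * F t) * (g t / lam) \<le> (lam * F t) powr p / p + (g t / lam) powr q / q"
        by (rule Youngs_inequality) (use p q1 lam0 F0 g0 in auto)
      moreover have "(lam * F t) * (g t / lam) = F t * g t" using lam0 by simp
      moreover have "(lam * F t) powr p = lam powr p * F t powr p" using lam0 F0 by (simp add: powr_mult)
      moreover have "(g t / lam) powr q = g t powr q / lam powr q" using lam0 g0 by (simp add: powr_divide)
      ultimately show ?thesis by simp
    qed
    have "(\<integral>\<^sup>+ t. ennreal (F t * g t) \<partial>lborel)
        \<le> (\<integral>\<^sup>+ t. ennreal (lam powr p / p) * ennreal (F t powr p) + ennreal (1 / (q * lam powr q)) * ennreal (g t powr q) \<partial>lborel)"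
    proof (rule nn_integral_mono)
      fix t
      have e: "lam powr p * F t powr p / p + g t powr q / lam powr q / q = (lam powr p / p) * F t powr p + (1 / (q * lam powr q)) * g t powr q"
        by simp
      have "ennreal (F t * g t) \<le> ennreal ((lam powr p / p) * F t powr p + (1 / (q * lam powr q)) * g t powr q)"
        using young[of t] unfolding e by (rule ennreal_leI)
      also have "\<dots> = ennreal (lam powr p / p) * ennreal (F t powr p) + ennreal (1 / (q * lam powr q)) * ennreal (g t powr q)"
      proof -
        have n1: "0 \<le> lam powr p / p" using p by simp
        have n2: "0 \<le> F t powr p" by simp
        have n3: "0 \<le> 1 / (q * lam powr q)" using q1 by simp
        have n4: "0 \<le> g t powr q" by simp
        show ?thesis
          by (simp only: ennreal_plus[OF mult_nonneg_nonneg[OF n1 n2] mult_nonneg_nonneg[OF n3 n4]]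
              ennreal_mult[OF n1 n2] ennreal_mult[OF n3 n4])
      qed
      finally show "ennreal (F t * g t) \<le> ennreal (lam powr p / p) * ennreal (F t powr p) + ennreal (1 / (q * lam powr q)) * ennreal (g t powr q)" .
    qed
    also have "\<dots> = ennreal (lam powr p / p) * (\<integral>\<^sup>+ t. ennreal (F t powr p) \<partial>lborel)
        + ennreal (1 / (q * lam powr q)) * (\<integral>\<^sup>+ t. ennreal (g t powr q) \<partial>lborel)"
    proof -
      have m1: "(\<lambda>t. ennreal (lam powr p / p) * ennreal (F t powr p)) \<in> borel_measurable lborel"
        using Fm by measurable
      have m2: "(\<lambda>t. ennreal (1 / (q * lam powr q)) * ennreal (g t powr q)) \<in> borel_measurable lborel"
        using gm by measurable
      have m3: "(\<lambda>t. ennreal (F t powr p)) \<in> borel_measurable lborel" using Fm by measurable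
      have m4: "(\<lambda>t. ennreal (g t powr q)) \<in> borel_measurable lborel" using gm by measurable
      show ?thesis
        unfolding nn_integral_add[OF m1 m2] nn_integral_cmult[OF m3] nn_integral_cmult[OF m4] ..
    qed
    also have "\<dots> \<le> ennreal (lam powr p / p) * ennreal A + ennreal (1 / (q * lam powr q)) * ennreal V"
      unfolding IA by (rule add_left_mono, rule mult_left_mono[OF gV]) simp
    also have "\<dots> = ennreal (lam powr p / p * A + 1 / (q * lam powr q) * V)"
    proof -
      have n1: "0 \<le> lam powr p / p" using p by simp
      have n3: "0 \<le> 1 / (q * lam powr q)" using q1 by simp
      have n2: "0 \<le> A" by (rule A0)
      have n4: "0 \<le> V" using V by simp
      show ?thesis
        by (simp only: ennreal_plus[OF mult_nonneg_nonneg[OF n1 n2] mult_nonneg_nonneg[OF n3 n4]]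
              ennreal_mult[OF n1 n2] ennreal_mult[OF n3 n4])
    qed
    also have "lam powr p / p * A + 1 / (q * lam powr q) * V = A powr (1/p) * V powr (1/q)"
    proof -
      have e1: "lam powr p * A = exp (a / p + v / q)"
      proof -
        have A: "A = exp a" unfolding a_def using Apos by simp
        have "(v - a) / q + a = a / p + v / q" using avp by (simp add: diff_divide_distrib)
        thus ?thesis unfolding lp A by (simp add: exp_add[symmetric])
      qed
      have e2: "V / lam powr q = exp (a / p + v / q)"
      proof -
        have Vv: "V = exp v" unfolding v_def using V by simp
        have "v - (v - a) / p = a / p + v / q" using avp by (simp add: diff_divide_distrib)
        thus ?thesis unfolding lq Vv by (simp add: exp_diff[symmetric])
      qed
      have e3: "A powr (1/p) * V powr (1/q) = exp (a / p + v / q)"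
        unfolding a_def v_def powr_def using Apos V by (simp add: exp_add)
      have "lam powr p / p * A + 1 / (q * lam powr q) * V = (1/p) * (lam powr p * A) + (1/q) * (V / lam powr q)"
        by (simp add: field_simps)
      also have "\<dots> = (1/p + 1/q) * exp (a / p + v / q)" unfolding e1 e2 by (simp add: algebra_simps)
      finally show ?thesis using q1 e3 by simp
    qed
    finally show ?thesis unfolding A_def .
  qed
qed

lemma power_int:
  fixes \<beta> q \<delta> :: real
  assumes b0: "0 \<le> \<beta>" and q0: "0 < q" and bq: "\<beta> * q < 1" and d: "0 < \<delta>" "\<delta> \<le> pi"
  shows "(\<integral>\<^sup>+ t. ennreal ((indicator {0..\<delta>} t * sin (t/2) powr (-\<beta>)) powr q) \<partial>lborel)
     \<le> ennreal (pi powr (\<beta>*q) * (\<delta> powr (1 - \<beta>*q) / (1 - \<beta>*q)))"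
proof -
  define c where "c = \<beta> * q"
  have c0: "0 \<le> c" "c < 1" using b0 q0 bq unfolding c_def by auto
  have hi: "((\<lambda>x. x powr (-c)) has_integral (\<delta> powr (-c+1) / (-c+1))) {0..\<delta>}"
    by (rule has_integral_powr_from_0) (use c0 d in auto)
  have nn: "(\<integral>\<^sup>+ x. ennreal (x powr (-c)) * indicator {0..\<delta>} x \<partial>lborel) = ennreal (\<delta> powr (-c+1) / (-c+1))"
    by (rule nn_integral_has_integral_lebesgue'[OF _ hi]) simp
  have "(\<integral>\<^sup>+ t. ennreal ((indicator {0..\<delta>} t * sin (t/2) powr (-\<beta>)) powr q) \<partial>lborel)
      \<le> (\<integral>\<^sup>+ t. ennreal (pi powr c) * (ennreal (t powr (-c)) * indicator {0..\<delta>} t) \<partial>lborel)"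
  proof (rule nn_integral_mono)
    fix t
    show "ennreal ((indicator {0..\<delta>} t * sin (t/2) powr (-\<beta>)) powr q)
      \<le> ennreal (pi powr c) * (ennreal (t powr (-c)) * indicator {0..\<delta>} t)"
    proof (cases "t \<in> {0<..\<delta>}")
      case True
      hence t: "0 < t" "t \<le> pi" using d by auto
      have s: "t / pi \<le> sin (t/2)" by (rule jordan) (use t in auto)
      have tp: "0 < t / pi" using t by simp
      have "(indicator {0..\<delta>} t * sin (t/2) powr (-\<beta>)) powr q = sin (t/2) powr (-c)"
        using True unfolding c_def by (simp add: powr_powr)
      also have "\<dots> \<le> (t / pi) powr (-c)"
        by (rule powr_mono2') (use c0 tp s in auto)
      also have "\<dots> = pi powr c * t powr (-c)"
      proof -
        have "(t / pi) powr c = t powr c / pi powr c" using t by (simp add: powr_divide)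
        hence "(t / pi) powr (-c) = inverse (t powr c / pi powr c)" by (simp add: powr_minus)
        also have "\<dots> = pi powr c * t powr (-c)" by (simp add: powr_minus divide_inverse mult.commute)
        finally show ?thesis .
      qed
      finally have "(indicator {0..\<delta>} t * sin (t/2) powr (-\<beta>)) powr q \<le> pi powr c * t powr (-c)" .
      hence "ennreal ((indicator {0..\<delta>} t * sin (t/2) powr (-\<beta>)) powr q) \<le> ennreal (pi powr c * t powr (-c))"
        by (rule ennreal_leI)
      thus ?thesis using True by (simp add: ennreal_mult)
    next
      case False
      hence "t = 0 \<or> t \<notin> {0..\<delta>}" by auto
      thus ?thesis by auto
    qed
  qed
  also have "\<dots> = ennreal (pi powr c) * ennreal (\<delta> powr (-c+1) / (-c+1))"
    by (subst nn_integral_cmult) (auto simp: nn)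
  also have "\<dots> = ennreal (pi powr (\<beta>*q) * (\<delta> powr (1 - \<beta>*q) / (1 - \<beta>*q)))"
  proof -
    have "0 \<le> \<delta> powr (-c+1) / (-c+1)" using c0 by simp
    hence "ennreal (pi powr c) * ennreal (\<delta> powr (-c+1) / (-c+1)) = ennreal (pi powr c * (\<delta> powr (-c+1) / (-c+1)))"
      using ennreal_mult[of "pi powr c" "\<delta> powr (-c+1) / (-c+1)"] by simp
    moreover have "-c+1 = 1 - \<beta>*q" unfolding c_def by simp
    ultimately show ?thesis unfolding c_def by simp
  qed
  finally show ?thesis .
qed

lemma near_alg:
  fixes N P c b q p :: real
  assumes N: "0 < N" and P: "0 < P" and c: "0 < c" and q: "0 < q" and pq: "1/p + 1/q = 1" and p: "0 < p"
    and that: "c' = 1 - b*q" "c = 1 - b * q"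
  shows "N * N powr (-1/p) * (P powr (b*q) * ((P / N) powr c' / c)) powr (1/q) = P powr (1/q) * c powr (-1/q) * N powr b"
proof -
  have V: "P powr (b*q) * ((P / N) powr c' / c) = exp (b*q*ln P + c' * (ln P - ln N) - ln c)"
    using N P c by (simp add: powr_def exp_add exp_diff ln_div)
  have "N * N powr (-1/p) * exp (b*q*ln P + c' * (ln P - ln N) - ln c) powr (1/q)
     = exp (ln N) * N powr (-1/p) * exp (b*q*ln P + c' * (ln P - ln N) - ln c) powr (1/q)"
    using N by simp
  also have "\<dots> = exp (ln N + (-1/p) * ln N + (1/q) * (b*q*ln P + c' * (ln P - ln N) - ln c))"
  proof -
    have "N \<noteq> 0" using N by simp
    thus ?thesis by (simp add: powr_def mult_exp_exp algebra_simps)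
  qed
  also have "ln N + (-1/p) * ln N + (1/q) * (b*q*ln P + c' * (ln P - ln N) - ln c) = (1/q) * ln P + (-1/q) * ln c + b * ln N"
  proof -
    have e3: "ln N / p = ln N - ln N / q"
    proof -
      have "ln N * (1/p + 1/q) = ln N" using pq by simp
      thus ?thesis by (simp add: distrib_left)
    qed
    show ?thesis unfolding that(1) using q e3 by (simp add: field_simps)
  qed
  also have "exp ((1/q) * ln P + (-1/q) * ln c + b * ln N) = P powr (1/q) * c powr (-1/q) * N powr b"
    using N P c by (simp add: powr_def mult_exp_exp algebra_simps)
  finally show ?thesis unfolding V .
qed

lemma far_alg:
  fixes m :: nat and q \<beta> :: real
  assumes m: "1 \<le> m" and q: "0 < q"
  shows "real (m+1) powr \<beta> * real (m+1) * (pi/real m - pi/(real m+1)) powr (1/q)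
      \<le> (2*pi) powr (1/q) * real (m+1) powr (\<beta> + 1 - 2/q)"
proof -
  define M where "M = real m + 1"
  have M: "0 < M" "real (m+1) = M" unfolding M_def by auto
  have mpos: "0 < real m" using m by simp
  have L: "pi/real m - pi/(real m+1) \<le> 2*pi / M^2"
  proof -
    have "pi/real m - pi/(real m+1) = pi / (real m * M)" unfolding M_def using mpos by (simp add: field_simps)
    also have "\<dots> \<le> pi / (M / 2 * M)"
    proof (rule divide_left_mono)
      show "M / 2 * M \<le> real m * M" using m M unfolding M_def by (intro mult_right_mono) auto
    qed (use M mpos in \<open>auto intro!: mult_pos_pos\<close>)
    also have "\<dots> = 2*pi / M^2" by (simp add: power2_eq_square)
    finally show ?thesis .
  qed
  have L0: "0 \<le> pi/real m - pi/(real m+1)" using mpos by (simp add: field_simps)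
  have "(pi/real m - pi/(real m+1)) powr (1/q) \<le> (2*pi / M^2) powr (1/q)"
    by (rule powr_mono2) (use L L0 q in auto)
  hence "real (m+1) powr \<beta> * real (m+1) * (pi/real m - pi/(real m+1)) powr (1/q)
      \<le> M powr \<beta> * M * (2*pi / M^2) powr (1/q)"
    unfolding M(2) using M by (intro mult_left_mono) auto
  also have "M powr \<beta> * M * (2*pi / M^2) powr (1/q) = exp (\<beta> * ln M) * exp (ln M) * exp ((1/q) * (ln (2*pi) - 2 * ln M))"
  proof -
    have "M \<noteq> 0" "2*pi / M^2 \<noteq> 0" using M by auto
    moreover have "ln (2*pi / M^2) = ln (2*pi) - 2 * ln M" using M by (simp add: ln_div ln_realpow)
    ultimately show ?thesis using M by (simp add: powr_def)
  qed
  also have "\<dots> = exp ((1/q) * ln (2*pi) + (\<beta> + 1 - 2/q) * ln M)"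
    by (simp add: mult_exp_exp algebra_simps)
  also have "\<dots> = (2*pi) powr (1/q) * M powr (\<beta> + 1 - 2/q)"
    using M by (simp add: powr_def exp_add)
  finally show ?thesis unfolding M(2) .
qed

context
  fixes p q \<beta> x :: real and f \<omega> :: "real \<Rightarrow> real" and a :: "nat \<Rightarrow> nat \<Rightarrow> real"
  assumes p: "1 < p" and qdef: "q = p / (p - 1)" and b0: "0 \<le> \<beta>" and bp: "\<beta> < 1 - 1/p"
    and Lp: "Lp_periodic p f" and om: "modulus_type \<omega>" and lts: "lower_tri_stoch a"
begin

definition "\<omega>c t = \<omega> (max 0 (min t (2*pi)))"
definition "FF t = \<bar>phi f x t\<bar> / \<omega>c t * sin (t/2) powr \<beta>"
definition "Kn n t = (\<Sum>k=0..n. a n k * Dk k t)"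

lemma q1: "1 < q" "1/p + 1/q = 1" "0 < q"
  using p unfolding qdef by (auto simp: field_simps)

lemma bq: "\<beta> * q < 1"
proof -
  have "1 - 1/p = 1/q" using q1 by simp
  hence "\<beta> < 1/q" using bp by simp
  thus ?thesis using q1 by (simp add: field_simps)
qed

lemma om_mono: "0 \<le> u \<Longrightarrow> u \<le> v \<Longrightarrow> v \<le> 2*pi \<Longrightarrow> \<omega> u \<le> \<omega> v"
proof -
  assume uv: "0 \<le> u" "u \<le> v" "v \<le> 2*pi"
  have "mono_on {0..2*pi} \<omega>" using om unfolding modulus_type_def by (rule conjunct1)
  thus ?thesis by (rule mono_onD) (use uv in auto)
qed

lemma om_pos: "0 < u \<Longrightarrow> u \<le> 2*pi \<Longrightarrow> 0 < \<omega> u"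
proof -
  assume u: "0 < u" "u \<le> 2*pi"
  have "\<forall>d. 0 < d \<and> d \<le> 2*pi \<longrightarrow> 0 < \<omega> d" using om unfolding modulus_type_def by (elim conjE)
  thus ?thesis using u by simp
qed

lemma om_nonneg: "0 \<le> u \<Longrightarrow> u \<le> 2*pi \<Longrightarrow> 0 \<le> \<omega> u"
proof -
  assume u: "0 \<le> u" "u \<le> 2*pi"
  show "0 \<le> \<omega> u"
  proof (cases "u = 0")
    case True thus ?thesis using om unfolding modulus_type_def by simp
  next
    case False thus ?thesis using om_pos[of u] u by simp
  qed
qed

lemma om_double: "0 \<le> u \<Longrightarrow> u \<le> pi \<Longrightarrow> \<omega> (2*u) \<le> 2 * \<omega> u"
proof -
  assume u: "0 \<le> u" "u \<le> pi"
  have H: "\<forall>d1 d2. 0 \<le> d1 \<and> d1 \<le> d2 \<and> d1 + d2 \<le> 2*pi \<longrightarrow> \<omega> (d1 + d2) \<le> \<omega> d1 + \<omega> d2"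
    using om unfolding modulus_type_def by blast
  have "\<omega> (u + u) \<le> \<omega> u + \<omega> u" using H[rule_format, of u u] u by simp
  moreover have "2*u = u + u" "2 * \<omega> u = \<omega> u + \<omega> u" by simp_all
  ultimately show "\<omega> (2*u) \<le> 2 * \<omega> u" by (simp only:)
qed

lemma omc_eq: "0 \<le> t \<Longrightarrow> t \<le> 2*pi \<Longrightarrow> \<omega>c t = \<omega> t"
  unfolding \<omega>c_def by simp

lemma omc_cont: "continuous_on UNIV \<omega>c"
proof -
  have c1: "continuous_on UNIV (\<lambda>t::real. max 0 (min t (2*pi)))" by (intro continuous_intros)
  have c2: "continuous_on {0..2*pi} \<omega>" using om unfolding modulus_type_def by simp
  show ?thesis unfolding \<omega>c_def
    by (rule continuous_on_compose2[OF c2 c1]) (auto simp: image_subset_iff)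
qed

lemma omc_meas[measurable]: "\<omega>c \<in> borel_measurable borel"
  by (rule borel_measurable_continuous_onI[OF omc_cont])

lemma f_meas[measurable]: "f \<in> borel_measurable borel"
  using Lp unfolding Lp_periodic_def by simp

lemma phi_meas[measurable]: "phi f x \<in> borel_measurable borel"
  unfolding phi_def by measurable

lemma FF_meas[measurable]: "FF \<in> borel_measurable borel"
  unfolding FF_def by measurable

lemma FF_nonneg: "0 \<le> FF t"
proof -
  have "0 \<le> \<omega>c t" unfolding \<omega>c_def by (rule om_nonneg) auto
  thus ?thesis unfolding FF_def by simp
qed

lemma wint_eq:
  assumes "0 \<le> u" "v \<le> 2*pi"
  shows "wint p \<beta> f \<omega> x u v = (\<integral>\<^sup>+ t. ennreal ((indicator {u..v} t * FF t) powr p) \<partial>lborel)"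
  unfolding wint_def
proof (rule nn_integral_cong)
  fix t
  show "indicator {u..v} t * ennreal ((\<bar>phi f x t\<bar> / \<omega> t) powr p * sin (t / 2) powr (\<beta> * p)) =
        ennreal ((indicator {u..v} t * FF t) powr p)"
  proof (cases "t \<in> {u..v}")
    case True
    hence t: "0 \<le> t" "t \<le> 2*pi" using assms by auto
    have s: "0 \<le> sin (t/2)" by (rule sin_ge_zero) (use t in auto)
    have o: "0 \<le> \<omega> t" by (rule om_nonneg[OF t])
    have "FF t = (\<bar>phi f x t\<bar> / \<omega> t) * (sin (t/2) powr \<beta>)"
      unfolding FF_def omc_eq[OF t] by simp
    hence "(FF t) powr p = (\<bar>phi f x t\<bar> / \<omega> t) powr p * (sin (t/2) powr \<beta>) powr p"
      using s o by (simp only: powr_mult[of "\<bar>phi f x t\<bar> / \<omega> t" "sin (t/2) powr \<beta>"] divide_nonneg_nonneg abs_ge_zero powr_ge_zero)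
    also have "(sin (t/2) powr \<beta>) powr p = sin (t/2) powr (\<beta> * p)" by (simp add: powr_powr)
    finally show ?thesis using True by simp
  next
    case False thus ?thesis by simp
  qed
qed

lemma T_rep:
  shows "IB {0..pi} (\<lambda>u. phi f x u * Kn n u)"
    "T_mean a f n x - f x = II {0..pi} (\<lambda>u. phi f x u * Kn n u) / pi"
proof -
  have p1: "1 \<le> p" using p by simp
  have ib: "IB {0..pi} (\<lambda>u. a n k * (phi f x u * Dk k u))" for k
    by (rule IB_cmult[OF rep(1)[OF Lp p1]])
  have e: "(\<lambda>u. phi f x u * Kn n u) = (\<lambda>u. \<Sum>k=0..n. a n k * (phi f x u * Dk k u))"
    unfolding Kn_def by (simp add: sum_distrib_left algebra_simps)
  show "IB {0..pi} (\<lambda>u. phi f x u * Kn n u)" unfolding e by (rule II_sum(2)) (use ib in auto)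
  have "T_mean a f n x - f x = (\<Sum>k=0..n. a n k * partial_sum f k x) - (\<Sum>k=0..n. a n k) * f x"
    unfolding T_mean_def lts_sum[OF lts] by simp
  also have "\<dots> = (\<Sum>k=0..n. a n k * (partial_sum f k x - f x))"
  proof -
    have "(\<Sum>k=0..n. a n k) * f x = (\<Sum>k=0..n. a n k * f x)" by (rule sum_distrib_right)
    moreover have "(\<Sum>k=0..n. a n k * (partial_sum f k x - f x)) = (\<Sum>k=0..n. a n k * partial_sum f k x) - (\<Sum>k=0..n. a n k * f x)"
      by (simp add: right_diff_distrib sum_subtractf)
    ultimately show ?thesis by simp
  qed
  also have "\<dots> = (\<Sum>k=0..n. a n k * (II {0..pi} (\<lambda>u. phi f x u * Dk k u) / pi))"
    using rep(2)[OF Lp p1] by simp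
  also have "\<dots> = (\<Sum>k=0..n. II {0..pi} (\<lambda>u. a n k * (phi f x u * Dk k u))) / pi"
    by (simp add: II_cmult sum_divide_distrib)
  also have "(\<Sum>k=0..n. II {0..pi} (\<lambda>u. a n k * (phi f x u * Dk k u))) = II {0..pi} (\<lambda>u. phi f x u * Kn n u)"
    unfolding e by (rule II_sum(1)[symmetric]) (use ib in auto)
  finally show "T_mean a f n x - f x = II {0..pi} (\<lambda>u. phi f x u * Kn n u) / pi" .
qed

lemma T_bound_nn:
  "ennreal \<bar>T_mean a f n x - f x\<bar> \<le> ennreal (1/pi) * (\<integral>\<^sup>+ t. ennreal \<bar>indicator {0..pi} t * (phi f x t * Kn n t)\<bar> \<partial>lborel)"
proof -
  have i: "integrable lborel (\<lambda>t. indicator {0..pi} t * (phi f x t * Kn n t))"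
    using T_rep(1) unfolding IB_def .
  have "ennreal \<bar>II {0..pi} (\<lambda>u. phi f x u * Kn n u)\<bar> \<le> (\<integral>\<^sup>+ t. ennreal \<bar>indicator {0..pi} t * (phi f x t * Kn n t)\<bar> \<partial>lborel)"
    using integral_norm_bound_ennreal[OF i] unfolding II_def by simp
  hence "ennreal (1/pi) * ennreal \<bar>II {0..pi} (\<lambda>u. phi f x u * Kn n u)\<bar> \<le> ennreal (1/pi) * (\<integral>\<^sup>+ t. ennreal \<bar>indicator {0..pi} t * (phi f x t * Kn n t)\<bar> \<partial>lborel)"
    by (rule mult_left_mono) simp
  moreover have "ennreal (1/pi) * ennreal \<bar>II {0..pi} (\<lambda>u. phi f x u * Kn n u)\<bar> = ennreal \<bar>T_mean a f n x - f x\<bar>"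
  proof -
    have "\<bar>II {0..pi} (\<lambda>u. phi f x u * Kn n u) / pi\<bar> = 1/pi * \<bar>II {0..pi} (\<lambda>u. phi f x u * Kn n u)\<bar>"
      by (simp add: abs_divide)
    thus ?thesis unfolding T_rep(2) using ennreal_mult[of "1/pi" "\<bar>II {0..pi} (\<lambda>u. phi f x u * Kn n u)\<bar>"] by simp
  qed
  ultimately show ?thesis by simp
qed


lemma phi_zero: "phi f x 0 = 0"
  unfolding phi_def by simp

lemma phi_id:
  assumes "0 < t" "t \<le> pi"
  shows "\<bar>phi f x t\<bar> = FF t * (\<omega> t * sin (t/2) powr (-\<beta>))"
proof -
  have s: "0 < sin (t/2)" by (rule sin_gt_zero) (use assms in auto)
  have o: "0 < \<omega> t" by (rule om_pos) (use assms in auto)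
  have oc: "\<omega>c t = \<omega> t" by (rule omc_eq) (use assms in auto)
  have "sin (t/2) powr \<beta> * sin (t/2) powr (-\<beta>) = 1"
    using s by (simp add: powr_add[symmetric])
  hence "FF t * (\<omega> t * sin (t/2) powr (-\<beta>)) = \<bar>phi f x t\<bar> * (\<omega> t / \<omega> t) * (sin (t/2) powr \<beta> * sin (t/2) powr (-\<beta>))"
    unfolding FF_def oc by (simp add: field_simps)
  also have "\<dots> = \<bar>phi f x t\<bar>" using o \<open>sin (t/2) powr \<beta> * sin (t/2) powr (-\<beta>) = 1\<close> by simp
  finally show ?thesis by simp
qed

lemma Kn_bound: "\<bar>Kn n t\<bar> \<le> real n + 1"
proof -
  have "\<bar>Kn n t\<bar> \<le> (\<Sum>k=0..n. \<bar>a n k * Dk k t\<bar>)" unfolding Kn_def by (rule sum_abs)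
  also have "\<dots> \<le> (\<Sum>k=0..n. a n k * (real n + 1))"
  proof (rule sum_mono)
    fix k assume k: "k \<in> {0..n}"
    have "\<bar>Dk k t\<bar> \<le> real n + 1" using Dk_bound[of k t] k by auto
    hence "a n k * \<bar>Dk k t\<bar> \<le> a n k * (real n + 1)" using lts_nonneg[OF lts] by (intro mult_left_mono) auto
    thus "\<bar>a n k * Dk k t\<bar> \<le> a n k * (real n + 1)" using lts_nonneg[OF lts, of n k] by (simp add: abs_mult)
  qed
  also have "\<dots> = real n + 1" using lts_sum[OF lts, of n] by (simp add: sum_distrib_right[symmetric])
  finally show ?thesis .
qed

lemma Kn_sin: "2 * sin (t/2) * Kn n t = (\<Sum>k=0..n. a n k * sin ((real k + 1/2) * t))"
  unfolding Kn_def sum_distrib_left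
proof (rule sum.cong)
  fix k
  have "2 * sin (t/2) * (a n k * Dk k t) = a n k * (2 * sin (t/2) * Dk k t)" by (simp add: algebra_simps)
  thus "2 * sin (t/2) * (a n k * Dk k t) = a n k * sin ((real k + 1/2) * t)" by (simp only: dirichlet)
qed simp

lemma pw_bound:
  fixes n :: nat and G :: "nat \<Rightarrow> real" and Ck :: real
  assumes G0: "\<And>m. 0 \<le> G m" and Ck0: "0 \<le> Ck"
    and KH: "\<And>m t. 1 \<le> m \<Longrightarrow> m \<le> n \<Longrightarrow> 0 < sin (t/2) \<Longrightarrow> 1 / sin (t/2) \<le> real m + 1 \<Longrightarrow>
        \<bar>\<Sum>k=0..n. a n k * sin ((real k + 1/2) * t)\<bar> \<le> Ck * G m"
  shows "\<bar>indicator {0..pi} t * (phi f x t * Kn n t)\<bar> \<le>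
     (real n + 1) * \<omega> (pi/(real n+1)) * ((indicator {0..pi/(real n+1)} t * FF t) * (indicator {0..pi/(real n+1)} t * sin (t/2) powr (-\<beta>)))
     + (\<Sum>m=1..n. (Ck * G m * \<omega> (pi / real m) * (real (m+1) powr \<beta> * real (m+1)) / 2)
          * ((indicator {pi/(real m+1)..pi/real m} t * FF t) * indicator {pi/(real m+1)..pi/real m} t))"
    (is "?L \<le> ?R0 + ?RS")
proof -
  define \<delta> where "\<delta> = pi / (real n + 1)"
  have d: "0 < \<delta>" "\<delta> \<le> pi" unfolding \<delta>_def by (auto simp: field_simps)
  have od: "0 \<le> \<omega> \<delta>" by (rule om_nonneg) (use d in auto)
  have R0: "0 \<le> ?R0" using od FF_nonneg unfolding \<delta>_def[symmetric] by (intro mult_nonneg_nonneg) auto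
  define trm where "trm m = (Ck * G m * \<omega> (pi / real m) * (real (m+1) powr \<beta> * real (m+1)) / 2)
          * ((indicator {pi/(real m+1)..pi/real m} t * FF t) * indicator {pi/(real m+1)..pi/real m} t)" for m
  have trm0: "0 \<le> trm m" if "1 \<le> m" for m
  proof -
    have "pi / real m \<le> 2*pi" using that by (simp add: field_simps)
    hence "0 \<le> \<omega> (pi / real m)" by (intro om_nonneg) auto
    thus ?thesis unfolding trm_def using G0 Ck0 FF_nonneg by (intro mult_nonneg_nonneg) auto
  qed
  have RS: "0 \<le> ?RS" unfolding trm_def[symmetric] by (intro sum_nonneg trm0) auto
  show ?thesis
  proof (cases "0 < t \<and> t \<le> pi")
    case False
    hence L0: "?L = 0" by (cases "t = 0") (auto simp: phi_zero indicator_def)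
    show ?thesis using R0 RS L0 by linarith
  next
    case True
    hence t: "0 < t" "t \<le> pi" by auto
    have s: "0 < sin (t/2)" by (rule sin_gt_zero) (use t in auto)
    have L: "?L = FF t * (\<omega> t * sin (t/2) powr (-\<beta>)) * \<bar>Kn n t\<bar>"
      using t phi_id[OF t] by (simp add: abs_mult)
    show ?thesis
    proof (cases "t \<le> \<delta>")
      case True
      have "?L \<le> FF t * (\<omega> \<delta> * sin (t/2) powr (-\<beta>)) * (real n + 1)"
        unfolding L
        by (intro mult_mono mult_right_mono om_mono Kn_bound FF_nonneg mult_nonneg_nonneg om_nonneg)
           (use t True d in auto)
      also have "\<dots> = ?R0"
      proof -
        have i1: "indicator {0..pi/(real n+1)} t = (1::real)" using t True unfolding \<delta>_def by (simp add: indicator_def)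
        show ?thesis unfolding i1 \<delta>_def by (simp add: mult_ac)
      qed
      finally show ?thesis using RS by linarith
    next
      case False
      define m where "m = nat \<lfloor>pi / t\<rfloor>"
      have pt1: "1 \<le> pi / t" using t by (simp add: field_simps)
      have ptn: "pi / t < real n + 1" using False t unfolding \<delta>_def by (simp add: field_simps)
      have fl0: "0 \<le> \<lfloor>pi / t\<rfloor>" using pt1 by simp
      have fl: "real m \<le> pi / t" "pi / t < real m + 1" unfolding m_def using fl0
        by (simp_all add: of_nat_nat)
      have m1: "1 \<le> m" unfolding m_def using pt1 by (simp add: le_nat_iff le_floor_iff)
      have "real m < real (n + 1)" using fl(1) ptn by simp
      hence "m < n + 1" by (simp only: of_nat_less_iff)
      hence mn: "m \<le> n" by simp
      have tm: "t \<le> pi / real m" using fl(1) t m1 by (simp add: field_simps)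
      have tm1: "pi / (real m + 1) < t" using fl(2) t by (simp add: field_simps)
      have sm: "1 / (real m + 1) \<le> sin (t/2)"
      proof -
        have "1 / (real m + 1) \<le> t / pi" using tm1 by (simp add: field_simps)
        also have "\<dots> \<le> sin (t/2)" by (rule jordan) (use t in auto)
        finally show ?thesis .
      qed
      have sinv: "1 / sin (t/2) \<le> real m + 1" using sm s by (simp add: field_simps)
      have kh: "\<bar>\<Sum>k=0..n. a n k * sin ((real k + 1/2) * t)\<bar> \<le> Ck * G m" by (rule KH[OF m1 mn s sinv])
      have Kb: "\<bar>Kn n t\<bar> \<le> Ck * G m * (real m + 1) / 2"
      proof -
        have "2 * sin (t/2) * \<bar>Kn n t\<bar> \<le> Ck * G m" using kh Kn_sin[of t n] s by (simp add: abs_mult)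
        hence "\<bar>Kn n t\<bar> \<le> Ck * G m / (2 * sin (t/2))" using s by (simp add: field_simps)
        also have "\<dots> = Ck * G m * (1 / sin (t/2)) / 2" by simp
        also have "\<dots> \<le> Ck * G m * (real m + 1) / 2"
          using sinv G0 Ck0 by (intro divide_right_mono mult_left_mono) auto
        finally show ?thesis .
      qed
      have sb: "sin (t/2) powr (-\<beta>) \<le> real (m+1) powr \<beta>"
      proof -
        have "sin (t/2) powr (-\<beta>) \<le> (1 / (real m + 1)) powr (-\<beta>)"
          by (rule powr_mono2') (use b0 sm in auto)
        also have "\<dots> = real (m+1) powr \<beta>" by (simp add: powr_minus powr_divide add.commute)
        finally show ?thesis .
      qed
      have pm2: "pi / real m \<le> 2 * pi" using m1 by (simp add: field_simps)
      have ob: "\<omega> t \<le> \<omega> (pi / real m)"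
        by (rule om_mono) (use t tm pm2 in auto)
      have "?L \<le> FF t * (\<omega> (pi / real m) * real (m+1) powr \<beta>) * (Ck * G m * (real m + 1) / 2)"
        unfolding L
        by (intro mult_mono mult_right_mono ob sb Kb FF_nonneg mult_nonneg_nonneg om_nonneg)
           (use t pm2 in auto)
      also have "\<dots> = trm m"
      proof -
        have i2: "indicator {pi/(real m+1)..pi/real m} t = (1::real)" using tm tm1 by (simp add: indicator_def)
        show ?thesis unfolding trm_def i2 by (simp add: mult_ac)
      qed
      also have "\<dots> \<le> ?RS" unfolding trm_def[symmetric]
        by (rule member_le_sum) (use m1 mn trm0 in auto)
      finally show ?thesis using R0 by linarith
    qed
  qed
qed


lemma wint_mono:
  assumes "0 \<le> u'" "u' \<le> u" "v \<le> v'"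
  shows "wint p \<beta> f \<omega> x u v \<le> wint p \<beta> f \<omega> x u' v'"
  unfolding wint_def
proof (rule nn_integral_mono)
  fix t
  have "indicator {u..v} t \<le> (indicator {u'..v'} t :: ennreal)" using assms by (auto simp: indicator_def)
  thus "indicator {u..v} t * ennreal ((\<bar>phi f x t\<bar> / \<omega> t) powr p * sin (t / 2) powr (\<beta> * p))
    \<le> indicator {u'..v'} t * ennreal ((\<bar>phi f x t\<bar> / \<omega> t) powr p * sin (t / 2) powr (\<beta> * p))"
    by (rule mult_right_mono) simp
qed

lemma ind_powr: "(indicator A t :: real) powr q = indicator A t"
  using q1 by (simp add: indicator_def)

lemma core_est:
  fixes n :: nat and G :: "nat \<Rightarrow> real" and Ck :: real
  assumes G0: "\<And>m. 0 \<le> G m" and Ck0: "0 \<le> Ck"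
    and KH: "\<And>m t. 1 \<le> m \<Longrightarrow> m \<le> n \<Longrightarrow> 0 < sin (t/2) \<Longrightarrow> 1 / sin (t/2) \<le> real m + 1 \<Longrightarrow>
        \<bar>\<Sum>k=0..n. a n k * sin ((real k + 1/2) * t)\<bar> \<le> Ck * G m"
    and Wfin: "wint p \<beta> f \<omega> x 0 (2*pi) \<noteq> \<infinity>"
  shows "\<bar>T_mean a f n x - f x\<bar> \<le> (1/pi) * (
      (real n + 1) * \<omega> (pi/(real n+1)) * (enn2real (wint p \<beta> f \<omega> x 0 (pi/(real n+1))) powr (1/p)
          * (pi powr (\<beta>*q) * ((pi/(real n+1)) powr (1 - \<beta>*q) / (1 - \<beta>*q))) powr (1/q))
    + (\<Sum>m=1..n. (Ck * G m * \<omega> (pi / real m) * (real (m+1) powr \<beta> * real (m+1)) / 2)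
          * (enn2real (wint p \<beta> f \<omega> x (pi/(real m+1)) (pi/real m)) powr (1/p) * (pi/real m - pi/(real m+1)) powr (1/q))))"
proof -
  define \<delta> where "\<delta> = pi / (real n + 1)"
  have d: "0 < \<delta>" "\<delta> \<le> pi" unfolding \<delta>_def by (auto simp: field_simps)
  define V where "V = pi powr (\<beta>*q) * (\<delta> powr (1 - \<beta>*q) / (1 - \<beta>*q))"
  have V0: "0 < V" unfolding V_def using bq d by simp
  define I where "I m = {pi/(real m+1)..pi/real m}" for m :: nat
  define A0 where "A0 = (real n + 1) * \<omega> \<delta>"
  define A where "A m = Ck * G m * \<omega> (pi / real m) * (real (m+1) powr \<beta> * real (m+1)) / 2" for m
  define X where "X t = (indicator {0..\<delta>} t * FF t) * (indicator {0..\<delta>} t * sin (t/2) powr (-\<beta>))" for t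
  define Y where "Y m t = (indicator (I m) t * FF t) * indicator (I m) t" for m t
  define W0 where "W0 = enn2real (wint p \<beta> f \<omega> x 0 \<delta>)"
  define Wm where "Wm m = enn2real (wint p \<beta> f \<omega> x (pi/(real m+1)) (pi/real m))" for m
  define B0 where "B0 = W0 powr (1/p) * V powr (1/q)"
  define Bm where "Bm m = Wm m powr (1/p) * (pi/real m - pi/(real m+1)) powr (1/q)" for m
  have A00: "0 \<le> A0" unfolding A0_def using d by (intro mult_nonneg_nonneg om_nonneg) auto
  have pm2: "pi / real m \<le> 2 * pi" if "1 \<le> m" for m :: nat using that by (simp add: field_simps)
  have A0m: "0 \<le> A m" if "1 \<le> m" for m unfolding A_def using G0 Ck0 om_nonneg[of "pi / real m"] pm2[OF that]
    by (intro mult_nonneg_nonneg divide_nonneg_nonneg) auto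
  have X0: "0 \<le> X t" for t unfolding X_def using FF_nonneg by (intro mult_nonneg_nonneg) auto
  have Y0: "0 \<le> Y m t" for m t unfolding Y_def using FF_nonneg by (intro mult_nonneg_nonneg) auto
  have Xm[measurable]: "X \<in> borel_measurable borel" unfolding X_def by measurable
  have Ym[measurable]: "Y m \<in> borel_measurable borel" for m unfolding Y_def I_def by measurable
  have pw: "ennreal \<bar>indicator {0..pi} t * (phi f x t * Kn n t)\<bar>
      \<le> ennreal A0 * ennreal (X t) + (\<Sum>m=1..n. ennreal (A m) * ennreal (Y m t))" for t
  proof -
    have "\<bar>indicator {0..pi} t * (phi f x t * Kn n t)\<bar> \<le> A0 * X t + (\<Sum>m=1..n. A m * Y m t)"
      using pw_bound[OF G0 Ck0 KH, where t=t] unfolding A0_def X_def A_def Y_def I_def \<delta>_def by simp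
    hence "ennreal \<bar>indicator {0..pi} t * (phi f x t * Kn n t)\<bar> \<le> ennreal (A0 * X t + (\<Sum>m=1..n. A m * Y m t))"
      by (rule ennreal_leI)
    also have "\<dots> = ennreal (A0 * X t) + ennreal (\<Sum>m=1..n. A m * Y m t)"
      by (rule ennreal_plus) (use A00 X0 A0m Y0 in \<open>auto intro!: sum_nonneg\<close>)
    also have "ennreal (\<Sum>m=1..n. A m * Y m t) = (\<Sum>m=1..n. ennreal (A m * Y m t))"
      by (rule sum_ennreal[symmetric]) (use A0m Y0 in auto)
    also have "\<dots> = (\<Sum>m=1..n. ennreal (A m) * ennreal (Y m t))"
      by (rule sum.cong) (use A0m Y0 in \<open>auto simp: ennreal_mult\<close>)
    also have "ennreal (A0 * X t) = ennreal A0 * ennreal (X t)" using A00 X0 by (simp add: ennreal_mult)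
    finally show ?thesis .
  qed
  have W0fin: "wint p \<beta> f \<omega> x 0 \<delta> \<noteq> \<infinity>"
    using wint_mono[of 0 0 \<delta> "2*pi"] Wfin d by (auto simp: top_unique)
  have hX: "(\<integral>\<^sup>+ t. ennreal (X t) \<partial>lborel) \<le> ennreal B0"
  proof -
    have e1: "(\<integral>\<^sup>+ t. ennreal ((indicator {0..\<delta>} t * FF t) powr p) \<partial>lborel) = wint p \<beta> f \<omega> x 0 \<delta>"
      using wint_eq[of 0 \<delta>] d by simp
    have "(\<integral>\<^sup>+ t. ennreal ((indicator {0..\<delta>} t * FF t) * (indicator {0..\<delta>} t * sin (t/2) powr (-\<beta>))) \<partial>lborel)
        \<le> ennreal (enn2real (\<integral>\<^sup>+ t. ennreal ((indicator {0..\<delta>} t * FF t) powr p) \<partial>lborel) powr (1/p) * V powr (1/q))"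
      by (rule holder_nn[OF p qdef])
         (use e1 W0fin FF_nonneg power_int[OF b0 q1(3) bq d] V0 in \<open>auto simp: V_def\<close>)
    thus ?thesis unfolding X_def B0_def W0_def e1 .
  qed
  have hY: "(\<integral>\<^sup>+ t. ennreal (Y m t) \<partial>lborel) \<le> ennreal (Bm m)" if m: "1 \<le> m" for m
  proof -
    have mpos: "0 < real m" using m by simp
    have "pi/(real m+1) < pi/real m" by (rule divide_strict_left_mono) (use mpos in auto)
    hence lpos: "0 < pi/real m - pi/(real m+1)" by simp
    have sub: "0 \<le> pi/(real m+1)" "pi/real m \<le> 2*pi" using pm2[OF m] by auto
    have e1: "(\<integral>\<^sup>+ t. ennreal ((indicator (I m) t * FF t) powr p) \<partial>lborel) = wint p \<beta> f \<omega> x (pi/(real m+1)) (pi/real m)"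
      using wint_eq[OF sub] unfolding I_def by simp
    have fin: "wint p \<beta> f \<omega> x (pi/(real m+1)) (pi/real m) \<noteq> \<infinity>"
      using wint_mono[of 0 "pi/(real m+1)" "pi/real m" "2*pi"] Wfin sub by (auto simp: top_unique)
    have e2: "(\<integral>\<^sup>+ t. ennreal ((indicator (I m) t :: real) powr q) \<partial>lborel) = ennreal (pi/real m - pi/(real m+1))"
    proof -
      have "(\<integral>\<^sup>+ t. ennreal ((indicator (I m) t :: real) powr q) \<partial>lborel) = (\<integral>\<^sup>+ t. indicator (I m) t \<partial>lborel)"
        by (rule nn_integral_cong) (simp add: ind_powr indicator_def)
      also have "\<dots> = emeasure lborel (I m)" by (simp add: I_def)
      also have "\<dots> = ennreal (pi/real m - pi/(real m+1))" unfolding I_def using lpos by simp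
      finally show ?thesis .
    qed
    have "(\<integral>\<^sup>+ t. ennreal ((indicator (I m) t * FF t) * indicator (I m) t) \<partial>lborel)
        \<le> ennreal (enn2real (\<integral>\<^sup>+ t. ennreal ((indicator (I m) t * FF t) powr p) \<partial>lborel) powr (1/p) * (pi/real m - pi/(real m+1)) powr (1/q))"
      by (rule holder_nn[OF p qdef]) (use e1 fin FF_nonneg e2 lpos in \<open>auto simp: I_def\<close>)
    thus ?thesis unfolding Y_def Bm_def Wm_def e1 .
  qed
  have B00: "0 \<le> B0" unfolding B0_def by simp
  have Bm0: "0 \<le> Bm m" for m unfolding Bm_def by simp
  have "(\<integral>\<^sup>+ t. ennreal \<bar>indicator {0..pi} t * (phi f x t * Kn n t)\<bar> \<partial>lborel)
      \<le> (\<integral>\<^sup>+ t. ennreal A0 * ennreal (X t) + (\<Sum>m=1..n. ennreal (A m) * ennreal (Y m t)) \<partial>lborel)"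
    by (rule nn_integral_mono) (rule pw)
  also have "\<dots> = ennreal A0 * (\<integral>\<^sup>+ t. ennreal (X t) \<partial>lborel) + (\<Sum>m=1..n. ennreal (A m) * (\<integral>\<^sup>+ t. ennreal (Y m t) \<partial>lborel))"
    by (simp add: nn_integral_add nn_integral_sum nn_integral_cmult)
  also have "\<dots> \<le> ennreal A0 * ennreal B0 + (\<Sum>m=1..n. ennreal (A m) * ennreal (Bm m))"
    by (intro add_mono mult_left_mono sum_mono hX hY) auto
  also have "\<dots> = ennreal (A0 * B0 + (\<Sum>m=1..n. A m * Bm m))"
  proof -
    have "(\<Sum>m=1..n. ennreal (A m) * ennreal (Bm m)) = (\<Sum>m=1..n. ennreal (A m * Bm m))"
      by (rule sum.cong) (use A0m Bm0 in \<open>auto simp: ennreal_mult\<close>)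
    also have "\<dots> = ennreal (\<Sum>m=1..n. A m * Bm m)"
      by (rule sum_ennreal) (use A0m Bm0 in auto)
    finally have s0: "(\<Sum>m=1..n. ennreal (A m) * ennreal (Bm m)) = ennreal (\<Sum>m=1..n. A m * Bm m)" .
    have s1: "ennreal A0 * ennreal B0 = ennreal (A0*B0)" using A00 B00 by (simp add: ennreal_mult)
    have s2: "0 \<le> (\<Sum>m=1..n. A m * Bm m)" using A0m Bm0 by (intro sum_nonneg mult_nonneg_nonneg) auto
    have s3: "ennreal (A0*B0) + ennreal (\<Sum>m=1..n. A m * Bm m) = ennreal (A0*B0 + (\<Sum>m=1..n. A m * Bm m))"
      by (rule ennreal_plus[symmetric]) (use A00 B00 s2 in auto)
    show ?thesis unfolding s0 s1 s3 ..
  qed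
  finally have int: "(\<integral>\<^sup>+ t. ennreal \<bar>indicator {0..pi} t * (phi f x t * Kn n t)\<bar> \<partial>lborel)
      \<le> ennreal (A0 * B0 + (\<Sum>m=1..n. A m * Bm m))" .
  have R0: "0 \<le> A0 * B0 + (\<Sum>m=1..n. A m * Bm m)"
    using A00 B00 A0m Bm0 by (intro add_nonneg_nonneg mult_nonneg_nonneg sum_nonneg) auto
  have "ennreal \<bar>T_mean a f n x - f x\<bar> \<le> ennreal (1/pi) * ennreal (A0 * B0 + (\<Sum>m=1..n. A m * Bm m))"
    using T_bound_nn[of n] int by (meson mult_left_mono order_trans zero_le)
  also have "\<dots> = ennreal (1/pi * (A0 * B0 + (\<Sum>m=1..n. A m * Bm m)))"
    using R0 ennreal_mult[of "1/pi" "A0 * B0 + (\<Sum>m=1..n. A m * Bm m)"] by simp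
  finally have "\<bar>T_mean a f n x - f x\<bar> \<le> 1/pi * (A0 * B0 + (\<Sum>m=1..n. A m * Bm m))"
    using R0 by (subst (asm) ennreal_le_iff) auto
  thus ?thesis unfolding A0_def B0_def A_def Bm_def W0_def Wm_def V_def \<delta>_def by simp
qed


lemma final_est:
  fixes n :: nat and G :: "nat \<Rightarrow> real" and Ck C1 C2 S :: real
  assumes G0: "\<And>m. 0 \<le> G m" and Ck0: "0 \<le> Ck"
    and KH: "\<And>m t. 1 \<le> m \<Longrightarrow> m \<le> n \<Longrightarrow> 0 < sin (t/2) \<Longrightarrow> 1 / sin (t/2) \<le> real m + 1 \<Longrightarrow>
        \<bar>\<Sum>k=0..n. a n k * sin ((real k + 1/2) * t)\<bar> \<le> Ck * G m"
    and Wfin: "wint p \<beta> f \<omega> x 0 (2*pi) \<noteq> \<infinity>"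
    and H1n: "1 \<le> n \<Longrightarrow> (\<Sum>m=1..n. real (m+1) powr (\<beta> + 1 - 2/q)
          * (enn2real (wint p \<beta> f \<omega> x (pi / real (m+1)) (pi / real m))) powr (1/p)) \<le> C1 * real (n+1) powr \<beta>"
    and C10: "0 \<le> C1"
    and H2n: "enn2real (wint p \<beta> f \<omega> x 0 (pi/(real n+1))) powr (1/p) \<le> C2 * real (n+1) powr (-1/p)"
    and C20: "0 \<le> C2"
    and GS: "\<And>m. 1 \<le> m \<Longrightarrow> m \<le> n \<Longrightarrow> \<omega> (pi/real m) * G m \<le> 2*S"
    and Sd: "\<omega> (pi/(real n+1)) \<le> S"
  shows "\<bar>T_mean a f n x - f x\<bar> \<le> (1/pi) * (C2 * (pi powr (1/q) * (1-\<beta>*q) powr (-1/q)) + Ck * (2*pi) powr (1/q) * C1)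
           * (real (n+1) powr \<beta> * S)"
proof -
  define N where "N = real n + 1"
  have N: "0 < N" "real (n+1) = N" unfolding N_def by auto
  define \<delta> where "\<delta> = pi / N"
  have d: "0 < \<delta>" "\<delta> \<le> pi" unfolding \<delta>_def N_def by (auto simp: field_simps)
  have od: "0 \<le> \<omega> \<delta>" by (rule om_nonneg) (use d in auto)
  have S0: "0 \<le> S" using od Sd unfolding \<delta>_def N_def by linarith
  define cN where "cN = pi powr (1/q) * (1-\<beta>*q) powr (-1/q)"
  define c2 where "c2 = (2*pi) powr (1/q)"
  define V where "V = pi powr (\<beta>*q) * ((pi/N) powr (1 - \<beta>*q) / (1 - \<beta>*q))"
  define W0 where "W0 = enn2real (wint p \<beta> f \<omega> x 0 \<delta>) powr (1/p)"
  define t where "t m = real (m+1) powr (\<beta> + 1 - 2/q) * (enn2real (wint p \<beta> f \<omega> x (pi / real (m+1)) (pi / real m))) powr (1/p)" for m :: nat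
  define A where "A m = Ck * G m * \<omega> (pi / real m) * (real (m+1) powr \<beta> * real (m+1)) / 2" for m :: nat
  define Bm where "Bm m = enn2real (wint p \<beta> f \<omega> x (pi/(real m+1)) (pi/real m)) powr (1/p) * (pi/real m - pi/(real m+1)) powr (1/q)" for m :: nat
  have core: "\<bar>T_mean a f n x - f x\<bar> \<le> (1/pi) * (N * \<omega> \<delta> * (W0 * V powr (1/q)) + (\<Sum>m=1..n. A m * Bm m))"
    using core_est[OF G0 Ck0 KH Wfin] unfolding N_def \<delta>_def W0_def V_def A_def Bm_def by simp
  have near: "N * \<omega> \<delta> * (W0 * V powr (1/q)) \<le> C2 * cN * (N powr \<beta> * S)"
  proof -
    have W0b: "W0 \<le> C2 * N powr (-1/p)" using H2n unfolding W0_def \<delta>_def N_def by (simp add: add.commute)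
    have "N * \<omega> \<delta> * (W0 * V powr (1/q)) \<le> N * \<omega> \<delta> * (C2 * N powr (-1/p) * V powr (1/q))"
      using W0b N od by (intro mult_left_mono mult_right_mono) auto
    also have "\<dots> = C2 * \<omega> \<delta> * (N * N powr (-1/p) * V powr (1/q))" by (simp add: mult_ac)
    also have "N * N powr (-1/p) * V powr (1/q) = cN * N powr \<beta>"
      unfolding V_def cN_def
      by (rule near_alg) (use N q1 p bq in auto)
    also have "C2 * \<omega> \<delta> * (cN * N powr \<beta>) \<le> C2 * S * (cN * N powr \<beta>)"
      using C20 Sd unfolding \<delta>_def N_def cN_def by (intro mult_right_mono mult_left_mono) auto
    finally show ?thesis by (simp add: mult_ac)
  qed
  have t0: "0 \<le> t m" for m unfolding t_def by simp
  have far_t: "A m * Bm m \<le> Ck * c2 * S * t m" if m: "1 \<le> m" "m \<le> n" for m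
  proof -
    define w where "w = enn2real (wint p \<beta> f \<omega> x (pi/(real m+1)) (pi/real m)) powr (1/p)"
    define l where "l = real (m+1) powr \<beta> * real (m+1) * (pi/real m - pi/(real m+1)) powr (1/q)"
    have "A m * Bm m = (Ck/2) * (\<omega> (pi/real m) * G m) * w * l"
      unfolding A_def Bm_def w_def l_def by (simp add: mult_ac)
    also have "\<dots> \<le> (Ck/2) * (2*S) * w * (c2 * real (m+1) powr (\<beta> + 1 - 2/q))"
    proof -
      have l: "l \<le> c2 * real (m+1) powr (\<beta> + 1 - 2/q)" unfolding l_def c2_def by (rule far_alg[OF m(1) q1(3)])
      have l0: "0 \<le> l" unfolding l_def by simp
      have "0 \<le> \<omega> (pi/real m)" using m by (intro om_nonneg) (auto simp: field_simps)
      hence "0 \<le> \<omega> (pi/real m) * G m" using G0 by simp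
      moreover have w0: "0 \<le> w" unfolding w_def by simp
      ultimately have ab: "(Ck/2) * (\<omega> (pi/real m) * G m) * w \<le> (Ck/2) * (2*S) * w"
        using GS[OF m] Ck0 by (intro mult_right_mono mult_left_mono) auto
      have b0': "0 \<le> (Ck/2) * (2*S) * w" using Ck0 S0 w0 by simp
      show ?thesis by (rule mult_mono[OF ab l b0' l0])
    qed
    also have "\<dots> = Ck * c2 * S * t m" unfolding t_def w_def by (simp add: mult_ac add.commute)
    finally show ?thesis .
  qed
  have far: "(\<Sum>m=1..n. A m * Bm m) \<le> Ck * c2 * C1 * (N powr \<beta> * S)"
  proof (cases "1 \<le> n")
    case True
    have "(\<Sum>m=1..n. A m * Bm m) \<le> (\<Sum>m=1..n. Ck * c2 * S * t m)"
      by (rule sum_mono) (use far_t in auto)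
    also have "\<dots> = Ck * c2 * S * (\<Sum>m=1..n. t m)" by (simp add: sum_distrib_left)
    also have "\<dots> \<le> Ck * c2 * S * (C1 * N powr \<beta>)"
      using H1n[OF True] Ck0 S0 unfolding t_def N(2)[symmetric] c2_def by (intro mult_left_mono) auto
    finally show ?thesis by (simp add: mult_ac)
  next
    case False
    hence "n = 0" by simp
    thus ?thesis using Ck0 C10 S0 unfolding c2_def by simp
  qed
  have "\<bar>T_mean a f n x - f x\<bar> \<le> (1/pi) * (C2 * cN * (N powr \<beta> * S) + Ck * c2 * C1 * (N powr \<beta> * S))"
    using core near far by (smt (verit) divide_nonneg_nonneg mult_left_mono pi_gt_zero less_eq_real_def zero_le_one)
  also have "\<dots> = (1/pi) * (C2 * cN + Ck * c2 * C1) * (N powr \<beta> * S)" by (simp add: algebra_simps)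
  finally show ?thesis unfolding cN_def c2_def N(2) .
qed


lemma consts_prep:
  assumes H1: "\<exists>C. \<forall>n::nat. n \<ge> 1 \<longrightarrow>
       (\<Sum>m=1..n. real (m+1) powr (\<beta> + 1 - 2/q)
          * (enn2real (wint p \<beta> f \<omega> x (pi / real (m+1)) (pi / real m))) powr (1/p))
        \<le> C * real (n+1) powr \<beta>"
    and H2: "\<exists>C. \<forall>n::nat. n \<ge> 1 \<longrightarrow>
       wint p \<beta> f \<omega> x 0 (2*pi / real n) \<noteq> \<infinity> \<and>
       (enn2real (wint p \<beta> f \<omega> x 0 (2*pi / real n))) powr (1/p)
        \<le> C * real (n+1) powr (-1/p)"
  shows "\<exists>C1 C2. 0 \<le> C1 \<and> 0 \<le> C2 \<and> wint p \<beta> f \<omega> x 0 (2*pi) \<noteq> \<infinity> \<and>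
     (\<forall>n::nat. 1 \<le> n \<longrightarrow> (\<Sum>m=1..n. real (m+1) powr (\<beta> + 1 - 2/q)
          * (enn2real (wint p \<beta> f \<omega> x (pi / real (m+1)) (pi / real m))) powr (1/p)) \<le> C1 * real (n+1) powr \<beta>) \<and>
     (\<forall>n::nat. enn2real (wint p \<beta> f \<omega> x 0 (pi/(real n+1))) powr (1/p) \<le> C2 * real (n+1) powr (-1/p))"
proof -
  obtain C1 where C1: "\<forall>n::nat. n \<ge> 1 \<longrightarrow>
       (\<Sum>m=1..n. real (m+1) powr (\<beta> + 1 - 2/q)
          * (enn2real (wint p \<beta> f \<omega> x (pi / real (m+1)) (pi / real m))) powr (1/p))
        \<le> C1 * real (n+1) powr \<beta>" using H1 by blast
  obtain C2 where C2: "\<forall>n::nat. n \<ge> 1 \<longrightarrow>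
       wint p \<beta> f \<omega> x 0 (2*pi / real n) \<noteq> \<infinity> \<and>
       (enn2real (wint p \<beta> f \<omega> x 0 (2*pi / real n))) powr (1/p)
        \<le> C2 * real (n+1) powr (-1/p)" using H2 by blast
  define C1' where "C1' = max C1 0"
  have C1'': "\<forall>n::nat. 1 \<le> n \<longrightarrow> (\<Sum>m=1..n. real (m+1) powr (\<beta> + 1 - 2/q)
          * (enn2real (wint p \<beta> f \<omega> x (pi / real (m+1)) (pi / real m))) powr (1/p)) \<le> C1' * real (n+1) powr \<beta>"
  proof (intro allI impI)
    fix n :: nat assume n: "1 \<le> n"
    have "C1 * real (n+1) powr \<beta> \<le> C1' * real (n+1) powr \<beta>" unfolding C1'_def
      by (intro mult_right_mono) auto
    thus "(\<Sum>m=1..n. real (m+1) powr (\<beta> + 1 - 2/q)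
          * (enn2real (wint p \<beta> f \<omega> x (pi / real (m+1)) (pi / real m))) powr (1/p)) \<le> C1' * real (n+1) powr \<beta>"
      using C1 n by (meson order_trans)
  qed
  have c21: "wint p \<beta> f \<omega> x 0 (2*pi) \<noteq> \<infinity>" "(enn2real (wint p \<beta> f \<omega> x 0 (2*pi))) powr (1/p) \<le> C2 * 2 powr (-1/p)"
    using C2[rule_format, of 1] by auto
  have C20: "0 \<le> C2"
  proof (rule ccontr)
    assume "\<not> 0 \<le> C2"
    hence "C2 * 2 powr (-1/p) < 0" by (simp add: mult_neg_pos)
    moreover have "0 \<le> (enn2real (wint p \<beta> f \<omega> x 0 (2*pi))) powr (1/p)" by simp
    ultimately show False using c21(2) by linarith
  qed
  have H2n: "enn2real (wint p \<beta> f \<omega> x 0 (pi/(real n+1))) powr (1/p) \<le> C2 * real (n+1) powr (-1/p)" for n :: nat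
  proof -
    define n' where "n' = max n 1"
    have n': "1 \<le> n'" "n \<le> n'" "n' \<le> n + 1" unfolding n'_def by auto
    have le: "pi/(real n+1) \<le> 2*pi / real n'"
    proof -
      have "real n' \<le> real (n + 1)" using n' by (simp only: of_nat_le_iff)
      hence "real n' \<le> 2 * (real n + 1)" by simp
      hence "pi * real n' \<le> pi * (2 * (real n + 1))" by (rule mult_left_mono) simp
      hence "pi * real n' \<le> 2 * pi * (real n + 1)" by (simp add: mult_ac)
      moreover have "0 < real n'" "0 < real n + 1" using n' by auto
      ultimately show ?thesis by (simp add: divide_le_eq le_divide_eq mult_ac)
    qed
    have fin: "wint p \<beta> f \<omega> x 0 (2*pi / real n') \<noteq> \<infinity>" using C2 n' by blast
    have "wint p \<beta> f \<omega> x 0 (pi/(real n+1)) \<le> wint p \<beta> f \<omega> x 0 (2*pi / real n')"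
      by (rule wint_mono) (use le in auto)
    hence "enn2real (wint p \<beta> f \<omega> x 0 (pi/(real n+1))) \<le> enn2real (wint p \<beta> f \<omega> x 0 (2*pi / real n'))"
      using fin by (intro enn2real_mono) (auto simp: top.not_eq_extremum)
    hence "enn2real (wint p \<beta> f \<omega> x 0 (pi/(real n+1))) powr (1/p) \<le> enn2real (wint p \<beta> f \<omega> x 0 (2*pi / real n')) powr (1/p)"
      using p by (intro powr_mono2) auto
    also have "\<dots> \<le> C2 * real (n'+1) powr (-1/p)" using C2 n' by blast
    also have "\<dots> \<le> C2 * real (n+1) powr (-1/p)"
    proof (rule mult_left_mono[OF _ C20])
      show "real (n'+1) powr (-1/p) \<le> real (n+1) powr (-1/p)"
        by (rule powr_mono2') (use p n' in auto)
    qed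
    finally show ?thesis .
  qed
  have C10: "0 \<le> C1'" unfolding C1'_def by simp
  show ?thesis using C1'' C20 c21(1) H2n C10 by blast
qed


lemma om_ratio:
  assumes m: "1 \<le> m" and k: "k + 1 \<le> 2*m"
  shows "\<omega> (pi / real m) \<le> 2 * \<omega> (pi / real (k+1))"
proof -
  have mpos: "0 < real m" using m by simp
  have "real (k+1) \<le> 2 * real m" using k by (metis of_nat_le_iff of_nat_mult of_nat_numeral)
  hence h: "pi * real (k+1) \<le> pi * (2 * real m)" by (rule mult_left_mono) simp
  have le: "pi / real m \<le> 2 * (pi / real (k+1))" using mpos h by (simp add: field_simps)
  have u: "0 \<le> pi / real (k+1)" "pi / real (k+1) \<le> pi" by (auto simp: field_simps)
  have "\<omega> (pi / real m) \<le> \<omega> (2 * (pi / real (k+1)))"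
    by (rule om_mono) (use le u in auto)
  also have "\<dots> \<le> 2 * \<omega> (pi / real (k+1))" by (rule om_double[OF u])
  finally show ?thesis .
qed

lemma om_pk_nonneg: "0 \<le> \<omega> (pi / real (k+1))"
  by (rule om_nonneg) (auto simp: field_simps)

lemma case_MR:
  assumes C10: "0 \<le> C1" and C20: "0 \<le> C2" and Wfin: "wint p \<beta> f \<omega> x 0 (2*pi) \<noteq> \<infinity>"
    and H1n: "\<forall>n::nat. 1 \<le> n \<longrightarrow> (\<Sum>m=1..n. real (m+1) powr (\<beta> + 1 - 2/q)
          * (enn2real (wint p \<beta> f \<omega> x (pi / real (m+1)) (pi / real m))) powr (1/p)) \<le> C1 * real (n+1) powr \<beta>"
    and H2n: "\<forall>n::nat. enn2real (wint p \<beta> f \<omega> x 0 (pi/(real n+1))) powr (1/p) \<le> C2 * real (n+1) powr (-1/p)"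
    and MR: "MRBVS a"
  shows "\<exists>C. \<forall>n. \<bar>T_mean a f n x - f x\<bar> \<le> C * (real (n+1) powr \<beta> * (\<Sum>k=0..n. a n k * \<omega> (pi / real (k+1))))"
proof -
  obtain K where K: "\<forall>n m. m < n \<longrightarrow> (\<Sum>k=m..n-1. \<bar>a n k - a n (k+1)\<bar>)
       \<le> K * (1 / real (m+1)) * (\<Sum>k\<in>{k. real m / 2 \<le> real k \<and> k \<le> m}. a n k)"
    using MR unfolding MRBVS_def by blast
  define K' where "K' = max K 0"
  have K'0: "0 \<le> K'" unfolding K'_def by simp
  have MR': "(\<Sum>k=m..n-1. \<bar>a n k - a n (k+1)\<bar>)
       \<le> K' * (1 / real (m+1)) * (\<Sum>k\<in>{k. real m / 2 \<le> real k \<and> k \<le> m}. a n k)" if "m < n" for n m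
  proof -
    have "0 \<le> (1 / real (m+1)) * (\<Sum>k\<in>{k. real m / 2 \<le> real k \<and> k \<le> m}. a n k)"
      using lts_nonneg[OF lts] by (intro mult_nonneg_nonneg sum_nonneg) auto
    hence "K * ((1 / real (m+1)) * (\<Sum>k\<in>{k. real m / 2 \<le> real k \<and> k \<le> m}. a n k))
        \<le> K' * ((1 / real (m+1)) * (\<Sum>k\<in>{k. real m / 2 \<le> real k \<and> k \<le> m}. a n k))"
      unfolding K'_def by (intro mult_right_mono) auto
    thus ?thesis using K that by (simp add: mult.assoc) (meson order_trans)
  qed
  define Ck where "Ck = 3 + 3 * K'"
  have Ck0: "0 \<le> Ck" unfolding Ck_def using K'0 by simp
  define C where "C = (1/pi) * (C2 * (pi powr (1/q) * (1-\<beta>*q) powr (-1/q)) + Ck * (2*pi) powr (1/q) * C1)"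
  have "\<bar>T_mean a f n x - f x\<bar> \<le> C * (real (n+1) powr \<beta> * (\<Sum>k=0..n. a n k * \<omega> (pi / real (k+1))))" for n
  proof -
    define G where "G m = (\<Sum>k=0..m. a n k)" for m
    define S where "S = (\<Sum>k=0..n. a n k * \<omega> (pi / real (k+1)))"
    have an: "\<And>k. 0 \<le> a n k" using lts_nonneg[OF lts] by blast
    have G0: "0 \<le> G m" for m unfolding G_def using an by (intro sum_nonneg) auto
    have KH: "\<bar>\<Sum>k=0..n. a n k * sin ((real k + 1/2) * t)\<bar> \<le> Ck * G m"
      if "1 \<le> m" "m \<le> n" "0 < sin (t/2)" "1 / sin (t/2) \<le> real m + 1" for m t
      unfolding Ck_def G_def by (rule mr_kernel[OF lts K'0 MR' that(2-4)])
    have GS: "\<omega> (pi/real m) * G m \<le> 2*S" if m: "1 \<le> m" "m \<le> n" for m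
    proof -
      have "\<omega> (pi/real m) * G m = (\<Sum>k=0..m. a n k * \<omega> (pi/real m))"
        unfolding G_def by (simp add: sum_distrib_left mult.commute)
      also have "\<dots> \<le> (\<Sum>k=0..m. a n k * (2 * \<omega> (pi / real (k+1))))"
        by (rule sum_mono, rule mult_left_mono[OF om_ratio[OF m(1)] an]) (use m in auto)
      also have "\<dots> \<le> (\<Sum>k=0..n. a n k * (2 * \<omega> (pi / real (k+1))))"
        by (rule sum_mono2) (use m an om_pk_nonneg in auto)
      also have "\<dots> = 2*S" unfolding S_def by (simp add: sum_distrib_left mult_ac)
      finally show ?thesis .
    qed
    have Sd: "\<omega> (pi/(real n+1)) \<le> S"
    proof -
      have "\<omega> (pi/(real n+1)) = (\<Sum>k=0..n. a n k * \<omega> (pi/(real n+1)))"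
        using lts_sum[OF lts, of n] by (simp add: sum_distrib_right[symmetric])
      also have "\<dots> \<le> S" unfolding S_def
      proof (rule sum_mono, rule mult_left_mono[OF _ an])
        fix k assume k: "k \<in> {0..n}"
        show "\<omega> (pi/(real n+1)) \<le> \<omega> (pi / real (k+1))"
          by (rule om_mono) (use k in \<open>auto simp: field_simps\<close>)
      qed
      finally show ?thesis .
    qed
    have "1 \<le> n \<Longrightarrow> (\<Sum>m=1..n. real (m+1) powr (\<beta> + 1 - 2/q)
          * (enn2real (wint p \<beta> f \<omega> x (pi / real (m+1)) (pi / real m))) powr (1/p)) \<le> C1 * real (n+1) powr \<beta>"
      using H1n by blast
    from final_est[OF G0 Ck0 KH Wfin this C10 H2n[rule_format] C20 GS Sd]
    show ?thesis unfolding C_def S_def by simp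
  qed
  thus ?thesis by blast
qed

lemma case_MH:
  assumes C10: "0 \<le> C1" and C20: "0 \<le> C2" and Wfin: "wint p \<beta> f \<omega> x 0 (2*pi) \<noteq> \<infinity>"
    and H1n: "\<forall>n::nat. 1 \<le> n \<longrightarrow> (\<Sum>m=1..n. real (m+1) powr (\<beta> + 1 - 2/q)
          * (enn2real (wint p \<beta> f \<omega> x (pi / real (m+1)) (pi / real m))) powr (1/p)) \<le> C1 * real (n+1) powr \<beta>"
    and H2n: "\<forall>n::nat. enn2real (wint p \<beta> f \<omega> x 0 (pi/(real n+1))) powr (1/p) \<le> C2 * real (n+1) powr (-1/p)"
    and MH: "MHBVS a"
  shows "\<exists>C. \<forall>n. \<bar>T_mean a f n x - f x\<bar> \<le> C * (real (n+1) powr \<beta> * (\<Sum>k=0..n. a n (n-k) * \<omega> (pi / real (k+1))))"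
proof -
  obtain K where K: "\<forall>n m. m < n \<longrightarrow> (\<Sum>k=0..n-m-1. \<bar>a n k - a n (k+1)\<bar>)
       \<le> K * (1 / real (m+1)) * (\<Sum>k=n-m..n. a n k)"
    using MH unfolding MHBVS_def by blast
  define K' where "K' = max K 0"
  have K'0: "0 \<le> K'" unfolding K'_def by simp
  have MH': "(\<Sum>k=0..n-m-1. \<bar>a n k - a n (k+1)\<bar>)
       \<le> K' * (1 / real (m+1)) * (\<Sum>k=n-m..n. a n k)" if "m < n" for n m
  proof -
    have "0 \<le> (1 / real (m+1)) * (\<Sum>k=n-m..n. a n k)"
      using lts_nonneg[OF lts] by (intro mult_nonneg_nonneg sum_nonneg) auto
    hence "K * ((1 / real (m+1)) * (\<Sum>k=n-m..n. a n k))
        \<le> K' * ((1 / real (m+1)) * (\<Sum>k=n-m..n. a n k))"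
      unfolding K'_def by (intro mult_right_mono) auto
    thus ?thesis using K that by (simp add: mult.assoc) (meson order_trans)
  qed
  define Ck where "Ck = 3 + 3 * K'"
  have Ck0: "0 \<le> Ck" unfolding Ck_def using K'0 by simp
  define C where "C = (1/pi) * (C2 * (pi powr (1/q) * (1-\<beta>*q) powr (-1/q)) + Ck * (2*pi) powr (1/q) * C1)"
  have "\<bar>T_mean a f n x - f x\<bar> \<le> C * (real (n+1) powr \<beta> * (\<Sum>k=0..n. a n (n-k) * \<omega> (pi / real (k+1))))" for n
  proof -
    define G where "G m = (\<Sum>k=n-m..n. a n k)" for m
    define S where "S = (\<Sum>k=0..n. a n (n-k) * \<omega> (pi / real (k+1)))"
    have an: "\<And>k. 0 \<le> a n k" using lts_nonneg[OF lts] by blast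
    have G0: "0 \<le> G m" for m unfolding G_def using an by (intro sum_nonneg) auto
    have KH: "\<bar>\<Sum>k=0..n. a n k * sin ((real k + 1/2) * t)\<bar> \<le> Ck * G m"
      if "1 \<le> m" "m \<le> n" "0 < sin (t/2)" "1 / sin (t/2) \<le> real m + 1" for m t
      unfolding Ck_def G_def by (rule mh_kernel[OF lts K'0 MH' that(2-4)])
    have rev: "(\<Sum>k=0..n. a n k * \<omega> (pi / real (n-k+1))) = S"
    proof -
      have "(\<Sum>k=0..n. a n k * \<omega> (pi / real (n-k+1))) = (\<Sum>i=0..n. a n (n + 0 - i) * \<omega> (pi / real (n - (n + 0 - i) + 1)))"
        by (rule sum.atLeastAtMost_rev)
      also have "\<dots> = S" unfolding S_def by (rule sum.cong) auto
      finally show ?thesis .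
    qed
    have GS: "\<omega> (pi/real m) * G m \<le> 2*S" if m: "1 \<le> m" "m \<le> n" for m
    proof -
      have "\<omega> (pi/real m) * G m = (\<Sum>k=n-m..n. a n k * \<omega> (pi/real m))"
        unfolding G_def by (simp add: sum_distrib_left mult.commute)
      also have "\<dots> \<le> (\<Sum>k=n-m..n. a n k * (2 * \<omega> (pi / real (n-k+1))))"
        by (rule sum_mono, rule mult_left_mono[OF om_ratio[OF m(1)] an]) (use m in auto)
      also have "\<dots> \<le> (\<Sum>k=0..n. a n k * (2 * \<omega> (pi / real (n-k+1))))"
      proof -
        have hn: "\<And>k. 0 \<le> a n k * (2 * \<omega> (pi / real (n-k+1)))"
          by (rule mult_nonneg_nonneg[OF an], rule mult_nonneg_nonneg, simp, rule om_pk_nonneg)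
        show ?thesis by (rule sum_mono2, simp, force, rule hn)
      qed
      also have "\<dots> = 2*S" unfolding rev[symmetric] by (simp add: sum_distrib_left mult_ac)
      finally show ?thesis .
    qed
    have Sd: "\<omega> (pi/(real n+1)) \<le> S"
    proof -
      have "\<omega> (pi/(real n+1)) = (\<Sum>k=0..n. a n k * \<omega> (pi/(real n+1)))"
        using lts_sum[OF lts, of n] by (simp add: sum_distrib_right[symmetric])
      also have "\<dots> \<le> (\<Sum>k=0..n. a n k * \<omega> (pi / real (n-k+1)))"
      proof (rule sum_mono, rule mult_left_mono[OF _ an])
        fix k assume k: "k \<in> {0..n}"
        have a2: "pi/(real n+1) \<le> pi/real (n-k+1)"
          by (rule divide_left_mono) (use k in auto)
        have a3: "pi/real (n-k+1) \<le> pi" by (simp add: field_simps)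
        show "\<omega> (pi/(real n+1)) \<le> \<omega> (pi / real (n-k+1))"
        proof (rule om_mono)
          show "pi / real (n-k+1) \<le> 2*pi" using a3 pi_gt_zero by linarith
        qed (use a2 in auto)
      qed
      finally show ?thesis unfolding rev .
    qed
    have "1 \<le> n \<Longrightarrow> (\<Sum>m=1..n. real (m+1) powr (\<beta> + 1 - 2/q)
          * (enn2real (wint p \<beta> f \<omega> x (pi / real (m+1)) (pi / real m))) powr (1/p)) \<le> C1 * real (n+1) powr \<beta>"
      using H1n by blast
    from final_est[OF G0 Ck0 KH Wfin this C10 H2n[rule_format] C20 GS Sd]
    show ?thesis unfolding C_def S_def by simp
  qed
  thus ?thesis by blast
qed

end

theorem theorem2:
  fixes p q \<beta> x :: real and f \<omega> :: "real \<Rightarrow> real" and a :: "nat \<Rightarrow> nat \<Rightarrow> real"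
  assumes "1 < p" and "q = p / (p - 1)" and "0 \<le> \<beta>" and "\<beta> < 1 - 1/p"
    and "Lp_periodic p f" and "modulus_type \<omega>" and "lower_tri_stoch a"
    and H1: "\<exists>C. \<forall>n::nat. n \<ge> 1 \<longrightarrow>
       (\<Sum>m=1..n. real (m+1) powr (\<beta> + 1 - 2/q)
          * (enn2real (wint p \<beta> f \<omega> x (pi / real (m+1)) (pi / real m))) powr (1/p))
        \<le> C * real (n+1) powr \<beta>"
    and H2: "\<exists>C. \<forall>n::nat. n \<ge> 1 \<longrightarrow>
       wint p \<beta> f \<omega> x 0 (2*pi / real n) \<noteq> \<infinity> \<and>
       (enn2real (wint p \<beta> f \<omega> x 0 (2*pi / real n))) powr (1/p)
        \<le> C * real (n+1) powr (-1/p)"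
  shows "(MRBVS a \<longrightarrow> (\<exists>C. \<forall>n. \<bar>T_mean a f n x - f x\<bar>
            \<le> C * (real (n+1) powr \<beta> * (\<Sum>k=0..n. a n k * \<omega> (pi / real (k+1))))))
      \<and> (MHBVS a \<longrightarrow> (\<exists>C. \<forall>n. \<bar>T_mean a f n x - f x\<bar>
            \<le> C * (real (n+1) powr \<beta> * (\<Sum>k=0..n. a n (n-k) * \<omega> (pi / real (k+1))))))"
proof -
  note base = assms(1-7)
  obtain C1 C2 where C: "0 \<le> C1" "0 \<le> C2" "wint p \<beta> f \<omega> x 0 (2*pi) \<noteq> \<infinity>"
     "\<forall>n::nat. 1 \<le> n \<longrightarrow> (\<Sum>m=1..n. real (m+1) powr (\<beta> + 1 - 2/q)
          * (enn2real (wint p \<beta> f \<omega> x (pi / real (m+1)) (pi / real m))) powr (1/p)) \<le> C1 * real (n+1) powr \<beta>"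
     "\<forall>n::nat. enn2real (wint p \<beta> f \<omega> x 0 (pi/(real n+1))) powr (1/p) \<le> C2 * real (n+1) powr (-1/p)"
    using consts_prep[OF base H1 H2] by blast
  show ?thesis
    using case_MR[OF base C] case_MH[OF base C] by blast
qed

end
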